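(* Let $J=JCK(Z,\delta)$ and $K=Z\oplus Zx$. Relative to the $\mathbb Z_2^2$-grading of $\mathrm{Der}(J)$ induced by the grading of $J$, one has $\mathrm{Der}(J)_{\bar0}^{[\bar0,\bar0]}=\{\tilde\partial:\partial\in\mathrm{Der}(K)_{\bar0}\}$, $\mathrm{Inder}(J)_{\bar0}^{[\bar0,\bar0]}=D(x,Zx)=\{\tilde\partial:\partial\in\mathrm{Inder}(K)_{\bar0}\}=\{\tilde\partial:\partial=\check\mu \text{ for some }\mu\in Z\delta\}$, $\mathrm{Der}(J)_{\bar0}^{[\bar1,\bar0]}=D(w_2,Zw_3)$, $\mathrm{Der}(J)_{\bar0}^{[\bar0,\bar1]}=D(w_3,Zw_1)$, $\mathrm{Der}(J)_{\bar0}^{[\bar1,\bar1]}=D(w_1,Zw_2)$, and $\mathrm{Der}(J)_{\bar0}$ is the direct sum of these four components; in particular every even derivation of $J$ with component outside $[\bar0,\bar0]$ is inner.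
   Context: Let $\mathbb F$ be a field of characteristic $\neq 2$, $Z$ a unital commutative associative $\mathbb F$-algebra, and $\delta$ a derivation of $Z$ such that $Z\delta(Z)=Z$ (the $\mathbb F$-span of all products $f\delta(g)$, $f,g\in Z$, is $Z$). The Cheng-Kac Jordan superalgebra $J=JCK(Z,\delta)=J_{\bar0}\oplus J_{\bar1}$ is defined as follows: $J_{\bar0}=Z1\oplus Zw_1\oplus Zw_2\oplus Zw_3$ and $J_{\bar1}=Zx\oplus Zx_1\oplus Zx_2\oplus Zx_3$ are free $Z$-modules of rank 4; $J_{\bar0}$ is the $Z$-algebra $(\mathbb F1\oplus\mathbb Fw_1\oplus\mathbb Fw_2\oplus\mathbb Fw_3)\otimes_{\mathbb F}Z$ with $1$ the identity, $w_1^2=w_2^2=1$, $w_3^2=-1$, $w_iw_j=0$ for $i\ne j$. For $f,g\in Z$ and $i,j\in\{1,2,3\}$ the remaining products are: $f(gx)=(fg)x$, $f(gx_j)=(fg)x_j$, $(fw_i)(gx)=(\delta(f)g)x_i$, $(fw_i)(gx_j)=-(fg)x_{i\times j}$, $(fx)(gx)=\delta(f)g-f\delta(g)$, $(fx)(gx_j)=-(fg)w_j$, $(fx_i)(gx)=(fg)w_i$, $(fx_i)(gx_j)=0$, extended by supercommutativity ($ab=(-1)^{|a||b|}ba$), where $x_{1\times2}=-x_{2\times1}=x_3$, $x_{1\times3}=-x_{3\times1}=x_2$, $x_{3\times2}=-x_{2\times3}=x_1$, $x_{i\times i}=0$. $J$ is $\mathbb Z_2^2$-graded by $J^{[\bar0,\bar0]}=Z\oplus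 Zx$, $J^{[\bar1,\bar0]}=Zw_1\oplus Zx_1$, $J^{[\bar0,\bar1]}=Zw_2\oplus Zx_2$, $J^{[\bar1,\bar1]}=Zw_3\oplus Zx_3$, and $\mathrm{Der}(J)^{\alpha}$ denotes the derivations mapping each $J^{\beta}$ into $J^{\alpha+\beta}$. Derivations are super derivations (homogeneous $d$ with $d(ab)=d(a)b+(-1)^{|d||a|}ad(b)$); $D(a,b)$ is $c\mapsto a(bc)-(-1)^{|a||b|}b(ac)$; $\mathrm{Inder}$ is the span of all $D(a,b)$; $D(A,B)$ denotes the span of $D(a,b)$, $a\in A,b\in B$. $K=Z\oplus Zx$ is a subalgebra of $J$. For $\mu\in\mathrm{Der}(Z)$ with $[\mu,\delta]=2a\delta$, $\check\mu$ is the even derivation of $K$ with $\check\mu|_Z=\mu$, $\check\mu(x)=ax$; every even derivation of $K$ is of this form. For $\partial\in\mathrm{Der}(K)_{\bar0}$ with $\mu=\partial|_Z$ and $a\in Z$ such that $\partial(x)=ax$, $\tilde\partial$ denotes the even derivation of $J$ given by $\tilde\partial|_K=\partial$, $\tilde\partial(fw_i)=\mu(f)w_i$, $\tilde\partial(fx_i)=(\mu(f)-af)x_i$ for $f\in Z$, $i=1,2,3$. *)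

theory Defs
  imports Main
begin

text \<open>Elements of the Cheng-Kac superalgebra JCK(Z,delta): an element is
  sc 1 + w1c w1 + w2c w2 + w3c w3 + xc x + x1c x1 + x2c x2 + x3c x3 with coefficients in Z.\<close>

datatype 'z jck = JE (sc: 'z) (w1c: 'z) (w2c: 'z) (w3c: 'z) (xc: 'z) (x1c: 'z) (x2c: 'z) (x3c: 'z)

instantiation jck :: (ab_group_add) ab_group_add
begin
definition zero_jck_def: "0 = JE 0 0 0 0 0 0 0 0"
definition plus_jck_def: "a + b = JE (sc a + sc b) (w1c a + w1c b) (w2c a + w2c b) (w3c a + w3c b)
   (xc a + xc b) (x1c a + x1c b) (x2c a + x2c b) (x3c a + x3c b)"
definition minus_jck_def: "a - b = JE (sc a - sc b) (w1c a - w1c b) (w2c a - w2c b) (w3c a - w3c b)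
   (xc a - xc b) (x1c a - x1c b) (x2c a - x2c b) (x3c a - x3c b)"
definition uminus_jck_def: "- a = JE (- sc a) (- w1c a) (- w2c a) (- w3c a)
   (- xc a) (- x1c a) (- x2c a) (- x3c a)"
instance
  by standard (simp_all add: zero_jck_def plus_jck_def minus_jck_def uminus_jck_def algebra_simps)
end

definition zmul :: "'z::comm_ring_1 \<Rightarrow> 'z jck \<Rightarrow> 'z jck" where
  "zmul z a = JE (z * sc a) (z * w1c a) (z * w2c a) (z * w3c a)
                 (z * xc a) (z * x1c a) (z * x2c a) (z * x3c a)"

text \<open>The product of JCK(Z,delta), obtained by F-bilinear extension of the multiplication table.\<close>
definition jmul :: "('z::comm_ring_1 \<Rightarrow> 'z) \<Rightarrow> 'z jck \<Rightarrow> 'z jck \<Rightarrow> 'z jck" where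
  "jmul \<delta> a c = JE
     (sc a * sc c + w1c a * w1c c + w2c a * w2c c - w3c a * w3c c
        + \<delta> (xc a) * xc c - xc a * \<delta> (xc c))
     (sc a * w1c c + w1c a * sc c - xc a * x1c c + x1c a * xc c)
     (sc a * w2c c + w2c a * sc c - xc a * x2c c + x2c a * xc c)
     (sc a * w3c c + w3c a * sc c - xc a * x3c c + x3c a * xc c)
     (sc a * xc c + sc c * xc a)
     (sc a * x1c c + \<delta> (w1c a) * xc c + w2c a * x3c c - w3c a * x2c c
        + sc c * x1c a + \<delta> (w1c c) * xc a + w2c c * x3c a - w3c c * x2c a)
     (sc a * x2c c + \<delta> (w2c a) * xc c - w1c a * x3c c + w3c a * x1c c
        + sc c * x2c a + \<delta> (w2c c) * xc a - w1c c * x3c a + w3c c * x1c a)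
     (sc a * x3c c + \<delta> (w3c a) * xc c - w1c a * x2c c + w2c a * x1c c
        + sc c * x3c a + \<delta> (w3c c) * xc a - w1c c * x2c a + w2c c * x1c a)"

definition w1J :: "'z::comm_ring_1 jck" where "w1J = JE 0 1 0 0 0 0 0 0"
definition w2J :: "'z::comm_ring_1 jck" where "w2J = JE 0 0 1 0 0 0 0 0"
definition w3J :: "'z::comm_ring_1 jck" where "w3J = JE 0 0 0 1 0 0 0 0"
definition xJ  :: "'z::comm_ring_1 jck" where "xJ  = JE 0 0 0 0 1 0 0 0"

definition J0 :: "'z::comm_ring_1 jck set" where
  "J0 = {e. xc e = 0 \<and> x1c e = 0 \<and> x2c e = 0 \<and> x3c e = 0}"
definition J1 :: "'z::comm_ring_1 jck set" where
  "J1 = {e. sc e = 0 \<and> w1c e = 0 \<and> w2c e = 0 \<and> w3c e = 0}"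
definition homog :: "'z::comm_ring_1 jck \<Rightarrow> bool" where
  "homog a \<longleftrightarrow> a \<in> J0 \<or> a \<in> J1"

text \<open>The Z_2^2-grading; Z_2^2 is represented as bool \<times> bool with componentwise xor.\<close>
fun gcomp :: "bool \<times> bool \<Rightarrow> 'z::comm_ring_1 jck set" where
  "gcomp (False, False) = {e. w1c e = 0 \<and> w2c e = 0 \<and> w3c e = 0 \<and> x1c e = 0 \<and> x2c e = 0 \<and> x3c e = 0}"
| "gcomp (True, False) = {e. sc e = 0 \<and> w2c e = 0 \<and> w3c e = 0 \<and> xc e = 0 \<and> x2c e = 0 \<and> x3c e = 0}"
| "gcomp (False, True) = {e. sc e = 0 \<and> w1c e = 0 \<and> w3c e = 0 \<and> xc e = 0 \<and> x1c e = 0 \<and> x3c e = 0}"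
| "gcomp (True, True) = {e. sc e = 0 \<and> w1c e = 0 \<and> w2c e = 0 \<and> xc e = 0 \<and> x1c e = 0 \<and> x2c e = 0}"

definition gadd :: "bool \<times> bool \<Rightarrow> bool \<times> bool \<Rightarrow> bool \<times> bool" where
  "gadd \<alpha> \<beta> = (fst \<alpha> \<noteq> fst \<beta>, snd \<alpha> \<noteq> snd \<beta>)"

text \<open>F-linearity on a subset S, where F acts on Z through the structure map emb.\<close>
definition flin :: "('f \<Rightarrow> 'z::comm_ring_1) \<Rightarrow> ('z jck \<Rightarrow> 'z jck) \<Rightarrow> 'z jck set \<Rightarrow> bool" where
  "flin emb d S \<longleftrightarrow> (\<forall>a\<in>S. \<forall>b\<in>S. d (a + b) = d a + d b)
                    \<and> (\<forall>k. \<forall>a\<in>S. d (zmul (emb k) a) = zmul (emb k) (d a))"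

definition EvenDerJ :: "('f \<Rightarrow> 'z::comm_ring_1) \<Rightarrow> ('z \<Rightarrow> 'z) \<Rightarrow> ('z jck \<Rightarrow> 'z jck) set" where
  "EvenDerJ emb \<delta> = {d. flin emb d UNIV \<and> (\<forall>a\<in>J0. d a \<in> J0) \<and> (\<forall>a\<in>J1. d a \<in> J1)
      \<and> (\<forall>a b. d (jmul \<delta> a b) = jmul \<delta> (d a) b + jmul \<delta> a (d b))}"

definition DerJ0 :: "('f \<Rightarrow> 'z::comm_ring_1) \<Rightarrow> ('z \<Rightarrow> 'z) \<Rightarrow> bool \<times> bool \<Rightarrow> ('z jck \<Rightarrow> 'z jck) set" where
  "DerJ0 emb \<delta> \<alpha> = {d \<in> EvenDerJ emb \<delta>. \<forall>\<beta>. \<forall>a\<in>gcomp \<beta>. d a \<in> gcomp (gadd \<alpha> \<beta>)}"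

text \<open>The subalgebra K = Z + Zx, its even and odd parts.\<close>
definition Kset :: "'z::comm_ring_1 jck set" where "Kset = gcomp (False, False)"
definition K0 :: "'z::comm_ring_1 jck set" where "K0 = Kset \<inter> J0"
definition K1 :: "'z::comm_ring_1 jck set" where "K1 = Kset \<inter> J1"

text \<open>Even derivations of K (as maps on J; only their values on K matter).\<close>
definition DerK0 :: "('f \<Rightarrow> 'z::comm_ring_1) \<Rightarrow> ('z \<Rightarrow> 'z) \<Rightarrow> ('z jck \<Rightarrow> 'z jck) set" where
  "DerK0 emb \<delta> = {d. (\<forall>a\<in>K0. d a \<in> K0) \<and> (\<forall>a\<in>K1. d a \<in> K1) \<and> flin emb d Kset
      \<and> (\<forall>a\<in>Kset. \<forall>b\<in>Kset. d (jmul \<delta> a b) = jmul \<delta> (d a) b + jmul \<delta> a (d b))}"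

text \<open>D(a,b)(c) = a(bc) - (-1)^{|a||b|} b(ac), for homogeneous a, b.\<close>
definition Dop :: "('z::comm_ring_1 \<Rightarrow> 'z) \<Rightarrow> 'z jck \<Rightarrow> 'z jck \<Rightarrow> 'z jck \<Rightarrow> 'z jck" where
  "Dop \<delta> a b = (\<lambda>c. if a \<in> J1 \<and> b \<in> J1
      then jmul \<delta> a (jmul \<delta> b c) + jmul \<delta> b (jmul \<delta> a c)
      else jmul \<delta> a (jmul \<delta> b c) - jmul \<delta> b (jmul \<delta> a c))"

definition spanF :: "('f \<Rightarrow> 'z::comm_ring_1) \<Rightarrow> ('z jck \<Rightarrow> 'z jck) set \<Rightarrow> ('z jck \<Rightarrow> 'z jck) set" where
  "spanF emb S = {(\<lambda>c. \<Sum>i<n. zmul (emb (k i)) (g i c)) | (n::nat) k g. \<forall>i<n. g i \<in> S}"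

definition InderJ :: "('f \<Rightarrow> 'z::comm_ring_1) \<Rightarrow> ('z \<Rightarrow> 'z) \<Rightarrow> ('z jck \<Rightarrow> 'z jck) set" where
  "InderJ emb \<delta> = spanF emb {Dop \<delta> a b | a b. homog a \<and> homog b}"

definition InderK0 :: "('f \<Rightarrow> 'z::comm_ring_1) \<Rightarrow> ('z \<Rightarrow> 'z) \<Rightarrow> ('z jck \<Rightarrow> 'z jck) set" where
  "InderK0 emb \<delta> = spanF emb {Dop \<delta> a b | a b. a \<in> Kset \<and> b \<in> Kset \<and> homog a \<and> homog b}
                    \<inter> DerK0 emb \<delta>"

text \<open>The extension of an even derivation of K to J.\<close>
definition tildeD :: "('z::comm_ring_1 jck \<Rightarrow> 'z jck) \<Rightarrow> 'z jck \<Rightarrow> 'z jck" where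
  "tildeD d = (\<lambda>e. let \<mu> = (\<lambda>f. sc (d (JE f 0 0 0 0 0 0 0))); a = xc (d xJ) in
      d (JE (sc e) 0 0 0 (xc e) 0 0 0)
      + JE 0 (\<mu> (w1c e)) (\<mu> (w2c e)) (\<mu> (w3c e)) 0
           (\<mu> (x1c e) - a * x1c e) (\<mu> (x2c e) - a * x2c e) (\<mu> (x3c e) - a * x3c e))"

definition checkK :: "('z::comm_ring_1 \<Rightarrow> 'z) \<Rightarrow> 'z \<Rightarrow> 'z jck \<Rightarrow> 'z jck" where
  "checkK \<mu> a = (\<lambda>e. JE (\<mu> (sc e)) 0 0 0 (\<mu> (xc e) + a * xc e) 0 0 0)"

end

theory Submission imports Defs begin

lemmas jck_ops = plus_jck_def minus_jck_def uminus_jck_def zero_jck_def zmul_def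

definition Tm :: "('z::comm_ring_1 \<Rightarrow> 'z) \<Rightarrow> 'z \<Rightarrow> 'z jck \<Rightarrow> 'z jck" where
  "Tm \<mu> a e = JE (\<mu> (sc e)) (\<mu> (w1c e)) (\<mu> (w2c e)) (\<mu> (w3c e)) (\<mu> (xc e) + a * xc e)
     (\<mu> (x1c e) - a * x1c e) (\<mu> (x2c e) - a * x2c e) (\<mu> (x3c e) - a * x3c e)"
definition E10 :: "('z::comm_ring_1 \<Rightarrow> 'z) \<Rightarrow> 'z \<Rightarrow> 'z jck \<Rightarrow> 'z jck" where
  "E10 \<delta> p e = JE 0 0 (p*w3c e) (p*w2c e) 0 (- (\<delta> p * xc e)) (p*x3c e) (p*x2c e)"
definition E01 :: "('z::comm_ring_1 \<Rightarrow> 'z) \<Rightarrow> 'z \<Rightarrow> 'z jck \<Rightarrow> 'z jck" where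
  "E01 \<delta> p e = JE 0 (p*w3c e) 0 (p*w1c e) 0 (p*x3c e) (\<delta> p * xc e) (p*x1c e)"
definition E11 :: "('z::comm_ring_1 \<Rightarrow> 'z) \<Rightarrow> 'z \<Rightarrow> 'z jck \<Rightarrow> 'z jck" where
  "E11 \<delta> p e = JE 0 (p*w2c e) (-(p*w1c e)) 0 0 (p*x2c e) (-(p*x1c e)) (-(\<delta> p*xc e))"

abbreviation "bS f \<equiv> JE f 0 0 0 0 0 0 0"
abbreviation "bW1 f \<equiv> JE 0 f 0 0 0 0 0 0"
abbreviation "bW2 f \<equiv> JE 0 0 f 0 0 0 0 0"
abbreviation "bW3 f \<equiv> JE 0 0 0 f 0 0 0 0"
abbreviation "bX f \<equiv> JE 0 0 0 0 f 0 0 0"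
abbreviation "bX1 f \<equiv> JE 0 0 0 0 0 f 0 0"
abbreviation "bX2 f \<equiv> JE 0 0 0 0 0 0 f 0"
abbreviation "bX3 f \<equiv> JE 0 0 0 0 0 0 0 f"

lemma jck_dec: "(e::'z::comm_ring_1 jck) = bS (sc e) + (bW1 (w1c e) + (bW2 (w2c e) + (bW3 (w3c e) +
   (bX (xc e) + (bX1 (x1c e) + (bX2 (x2c e) + bX3 (x3c e)))))))"
  by (cases e) (simp add: jck_ops)

lemma shapeFF0: "y \<in> gcomp (False,False) \<Longrightarrow> y \<in> J0 \<Longrightarrow> y = bS (sc y)" by (cases y) (simp add: J0_def)
lemma shapeFF1: "y \<in> gcomp (False,False) \<Longrightarrow> y \<in> J1 \<Longrightarrow> y = bX (xc y)" by (cases y) (simp add: J1_def)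
lemma shapeTF0: "y \<in> gcomp (True,False) \<Longrightarrow> y \<in> J0 \<Longrightarrow> y = bW1 (w1c y)" by (cases y) (simp add: J0_def)
lemma shapeTF1: "y \<in> gcomp (True,False) \<Longrightarrow> y \<in> J1 \<Longrightarrow> y = bX1 (x1c y)" by (cases y) (simp add: J1_def)
lemma shapeFT0: "y \<in> gcomp (False,True) \<Longrightarrow> y \<in> J0 \<Longrightarrow> y = bW2 (w2c y)" by (cases y) (simp add: J0_def)
lemma shapeFT1: "y \<in> gcomp (False,True) \<Longrightarrow> y \<in> J1 \<Longrightarrow> y = bX2 (x2c y)" by (cases y) (simp add: J1_def)
lemma shapeTT0: "y \<in> gcomp (True,True) \<Longrightarrow> y \<in> J0 \<Longrightarrow> y = bW3 (w3c y)" by (cases y) (simp add: J0_def)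
lemma shapeTT1: "y \<in> gcomp (True,True) \<Longrightarrow> y \<in> J1 \<Longrightarrow> y = bX3 (x3c y)" by (cases y) (simp add: J1_def)

lemma inS: "bS f \<in> gcomp (False,False) \<and> bS f \<in> J0" by (simp add: J0_def)
lemma inX: "bX f \<in> gcomp (False,False) \<and> bX f \<in> J1" by (simp add: J1_def)
lemma inW1: "bW1 f \<in> gcomp (True,False) \<and> bW1 f \<in> J0" by (simp add: J0_def)
lemma inX1: "bX1 f \<in> gcomp (True,False) \<and> bX1 f \<in> J1" by (simp add: J1_def)
lemma inW2: "bW2 f \<in> gcomp (False,True) \<and> bW2 f \<in> J0" by (simp add: J0_def)
lemma inX2: "bX2 f \<in> gcomp (False,True) \<and> bX2 f \<in> J1" by (simp add: J1_def)
lemma inW3: "bW3 f \<in> gcomp (True,True) \<and> bW3 f \<in> J0" by (simp add: J0_def)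
lemma inX3: "bX3 f \<in> gcomp (True,True) \<and> bX3 f \<in> J1" by (simp add: J1_def)

definition sg :: "bool \<Rightarrow> bool \<Rightarrow> bool \<times> bool \<Rightarrow> 'f::field" where
  "sg a b \<gamma> = (if (a \<and> fst \<gamma>) = (b \<and> snd \<gamma>) then 1 else -1)"

definition sig :: "('f::field \<Rightarrow> 'z::comm_ring_1) \<Rightarrow> bool \<Rightarrow> bool \<Rightarrow> 'z jck \<Rightarrow> 'z jck" where
  "sig emb a b e = JE (sc e) (emb (sg a b (True,False)) * w1c e) (emb (sg a b (False,True)) * w2c e)
     (emb (sg a b (True,True)) * w3c e) (xc e) (emb (sg a b (True,False)) * x1c e)
     (emb (sg a b (False,True)) * x2c e) (emb (sg a b (True,True)) * x3c e)"

locale ck =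
  fixes emb :: "'f::field \<Rightarrow> 'z::comm_ring_1" and \<delta> :: "'z \<Rightarrow> 'z"
  assumes char: "(2::'f) \<noteq> 0"
    and emb_one: "emb 1 = 1"
    and emb_add: "\<forall>a b. emb (a + b) = emb a + emb b"
    and emb_mult: "\<forall>a b. emb (a * b) = emb a * emb b"
    and der_add: "\<forall>a b. \<delta> (a + b) = \<delta> a + \<delta> b"
    and der_lin: "\<forall>k a. \<delta> (emb k * a) = emb k * \<delta> a"
    and der_leib: "\<forall>a b. \<delta> (a * b) = \<delta> a * b + a * \<delta> b"
    and nondeg: "\<forall>z. \<exists>(n::nat) f g. z = (\<Sum>i<n. f i * \<delta> (g i))"
begin

lemma dadd[simp]: "\<delta> (a + b) = \<delta> a + \<delta> b" using der_add by blast
lemma dmult[simp]: "\<delta> (a * b) = \<delta> a * b + a * \<delta> b" using der_leib by blast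
lemma d0[simp]: "\<delta> 0 = 0" using dadd[of 0 0] by simp
lemma d1[simp]: "\<delta> 1 = 0" using dmult[of 1 1] by simp
lemma dminus[simp]: "\<delta> (- a) = - \<delta> a"
proof - have "\<delta> a + \<delta> (-a) = 0" using dadd[of a "-a"] by simp
  thus ?thesis by (metis neg_eq_iff_add_eq_0) qed
lemma ddiff[simp]: "\<delta> (a - b) = \<delta> a - \<delta> b" using dadd[of a "-b"] by simp
lemma dnat: "\<delta> (of_nat n) = 0"
  by (induct n) simp_all
lemma dnum[simp]: "\<delta> (numeral n) = 0"
  using dnat[of "numeral n"] by simp

lemma Tm_der:
  assumes ma: "\<And>x y. \<mu> (x + y) = \<mu> x + \<mu> y"
    and mm: "\<And>x y. \<mu> (x * y) = \<mu> x * y + x * \<mu> y"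
    and md: "\<And>x. \<mu> (\<delta> x) = \<delta> (\<mu> x) + 2 * a * \<delta> x"
  shows "Tm \<mu> a (jmul \<delta> u v) = jmul \<delta> (Tm \<mu> a u) v + jmul \<delta> u (Tm \<mu> a v)"
proof -
  have m0: "\<mu> 0 = 0" using ma[of 0 0] by simp
  have mn: "\<mu> (- x) = - \<mu> x" for x
  proof - have "\<mu> x + \<mu> (-x) = 0" using ma[of x "-x"] m0 by simp
    thus ?thesis by (metis neg_eq_iff_add_eq_0) qed
  have ms: "\<mu> (x - y) = \<mu> x - \<mu> y" for x y using ma[of x "-y"] mn by simp
  show ?thesis unfolding Tm_def jmul_def
    by (simp add: ma mm md mn ms jck_ops algebra_simps)
qed

lemma E10_der: "E10 \<delta> p (jmul \<delta> u v) = jmul \<delta> (E10 \<delta> p u) v + jmul \<delta> u (E10 \<delta> p v)"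
  unfolding E10_def jmul_def by (simp add: jck_ops algebra_simps)
lemma E01_der: "E01 \<delta> p (jmul \<delta> u v) = jmul \<delta> (E01 \<delta> p u) v + jmul \<delta> u (E01 \<delta> p v)"
  unfolding E01_def jmul_def by (simp add: jck_ops algebra_simps)
lemma E11_der: "E11 \<delta> p (jmul \<delta> u v) = jmul \<delta> (E11 \<delta> p u) v + jmul \<delta> u (E11 \<delta> p v)"
  unfolding E11_def jmul_def by (simp add: jck_ops algebra_simps)


lemma ED_add: "d \<in> EvenDerJ emb \<delta> \<Longrightarrow> d (a + b) = d a + d b"
  unfolding EvenDerJ_def flin_def by blast
lemma ED_zmul: "d \<in> EvenDerJ emb \<delta> \<Longrightarrow> d (zmul (emb k) a) = zmul (emb k) (d a)"
  unfolding EvenDerJ_def flin_def by blast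
lemma ED_mul: "d \<in> EvenDerJ emb \<delta> \<Longrightarrow> d (jmul \<delta> a b) = jmul \<delta> (d a) b + jmul \<delta> a (d b)"
  unfolding EvenDerJ_def by blast
lemma ED_J0: "d \<in> EvenDerJ emb \<delta> \<Longrightarrow> a \<in> J0 \<Longrightarrow> d a \<in> J0"
  unfolding EvenDerJ_def by blast
lemma ED_J1: "d \<in> EvenDerJ emb \<delta> \<Longrightarrow> a \<in> J1 \<Longrightarrow> d a \<in> J1"
  unfolding EvenDerJ_def by blast
lemma ED_0: "d \<in> EvenDerJ emb \<delta> \<Longrightarrow> d 0 = 0"
  using ED_add[of d 0 0] by (metis add.right_neutral add_left_cancel)
lemma DJ_E: "d \<in> DerJ0 emb \<delta> \<alpha> \<Longrightarrow> d \<in> EvenDerJ emb \<delta>"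
  unfolding DerJ0_def by blast
lemma DJ_g: "d \<in> DerJ0 emb \<delta> \<alpha> \<Longrightarrow> a \<in> gcomp \<beta> \<Longrightarrow> d a \<in> gcomp (gadd \<alpha> \<beta>)"
  unfolding DerJ0_def by blast

lemma emb0[simp]: "emb 0 = 0" using emb_add by (metis add_cancel_right_right)
lemma emb1[simp]: "emb 1 = 1" by (rule emb_one)
lemma embm1[simp]: "emb (-1) = -1"
  using emb_add[rule_format, of "-1" 1] by (simp add: eq_neg_iff_add_eq_0)
lemma embmult: "emb (a * b) = emb a * emb b" using emb_mult by blast
lemma embadd: "emb (a + b) = emb a + emb b" using emb_add by blast
lemma demb[simp]: "\<delta> (emb k) = 0" using der_lin[rule_format, of k 1] by simp
lemma two_cancel: "2 * (u::'z) = 0 \<Longrightarrow> u = 0"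
proof -
  assume h: "2 * u = 0"
  have "emb (inverse 2) * 2 = 1"
    using embmult[of "inverse 2" 2] embadd[of 1 1] char by (simp add: one_add_one)
  hence "u = emb (inverse 2) * (2 * u)" by (simp add: mult.assoc[symmetric])
  thus ?thesis using h by simp
qed
lemma dbl_zero[simp]: "((u::'z) + u = 0) = (u = 0)"
  by (metis two_cancel mult_2 add.right_neutral)
lemma half: "\<exists>h. 2 * h = (u::'z)"
proof -
  have "emb (inverse 2) * 2 = 1"
    using embmult[of "inverse 2" 2] embadd[of 1 1] char by (simp add: one_add_one)
  hence "2 * (emb (inverse 2) * u) = u" by (metis mult.assoc mult.commute mult_1)
  thus ?thesis by blast
qed
lemma delta_cancel: "(\<And>z. u * \<delta> z = v * \<delta> z) \<Longrightarrow> u = v"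
proof -
  assume h: "\<And>z. u * \<delta> z = v * \<delta> z"
  obtain n :: nat and f g where one: "(1::'z) = (\<Sum>i<n. f i * \<delta> (g i))" using nondeg[rule_format, of 1] by blast
  have "u = u * 1" by simp
  also have "\<dots> = (\<Sum>i<n. f i * (u * \<delta> (g i)))" unfolding one
    by (simp add: sum_distrib_left algebra_simps)
  also have "\<dots> = (\<Sum>i<n. f i * (v * \<delta> (g i)))" using h by simp
  also have "\<dots> = v * 1" unfolding one by (simp add: sum_distrib_left algebra_simps)
  finally show ?thesis by simp
qed

lemma cls00:
  assumes dd: "d \<in> DerJ0 emb \<delta> (False,False)"
  defines "\<mu> \<equiv> \<lambda>f. sc (d (bS f))" and "a \<equiv> xc (d xJ)"
  shows "d = Tm \<mu> a \<and> (\<forall>x y. \<mu> (x + y) = \<mu> x + \<mu> y) \<and> (\<forall>k x. \<mu> (emb k * x) = emb k * \<mu> x)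
     \<and> (\<forall>x y. \<mu> (x * y) = \<mu> x * y + x * \<mu> y) \<and> (\<forall>x. \<mu> (\<delta> x) = \<delta> (\<mu> x) + 2 * a * \<delta> x)
     \<and> \<mu> 1 = 0"
proof -
  have E: "d \<in> EvenDerJ emb \<delta>" using dd by (rule DJ_E)
  have g: "\<And>y \<beta>. y \<in> gcomp \<beta> \<Longrightarrow> d y \<in> gcomp \<beta>" using DJ_g[OF dd] by (simp add: gadd_def)
  define \<xi> where "\<xi> f = xc (d (bX f))" for f
  define \<omega>1 where "\<omega>1 f = w1c (d (bW1 f))" for f
  define \<omega>2 where "\<omega>2 f = w2c (d (bW2 f))" for f
  define \<omega>3 where "\<omega>3 f = w3c (d (bW3 f))" for f
  define \<chi>1 where "\<chi>1 f = x1c (d (bX1 f))" for f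
  define \<chi>2 where "\<chi>2 f = x2c (d (bX2 f))" for f
  define \<chi>3 where "\<chi>3 f = x3c (d (bX3 f))" for f
  have hS: "d (bS f) = bS (\<mu> f)" for f unfolding \<mu>_def
    using inS[of f] by (meson E ED_J0 g shapeFF0)
  have hX: "d (bX f) = bX (\<xi> f)" for f unfolding \<xi>_def
    using inX[of f] by (meson E ED_J1 g shapeFF1)
  have hW1: "d (bW1 f) = bW1 (\<omega>1 f)" for f unfolding \<omega>1_def
    using inW1[of f] by (meson E ED_J0 g shapeTF0)
  have hW2: "d (bW2 f) = bW2 (\<omega>2 f)" for f unfolding \<omega>2_def
    using inW2[of f] by (meson E ED_J0 g shapeFT0)
  have hW3: "d (bW3 f) = bW3 (\<omega>3 f)" for f unfolding \<omega>3_def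
    using inW3[of f] by (meson E ED_J0 g shapeTT0)
  have hX1: "d (bX1 f) = bX1 (\<chi>1 f)" for f unfolding \<chi>1_def
    using inX1[of f] by (meson E ED_J1 g shapeTF1)
  have hX2: "d (bX2 f) = bX2 (\<chi>2 f)" for f unfolding \<chi>2_def
    using inX2[of f] by (meson E ED_J1 g shapeFT1)
  have hX3: "d (bX3 f) = bX3 (\<chi>3 f)" for f unfolding \<chi>3_def
    using inX3[of f] by (meson E ED_J1 g shapeTT1)
  note hs = hS hX hW1 hW2 hW3 hX1 hX2 hX3
  note M = ED_mul[OF E]
  have ma: "\<mu> (x + y) = \<mu> x + \<mu> y" for x y
    using ED_add[OF E, of "bS x" "bS y"] by (simp add: hs jck_ops)
  have ml: "\<mu> (emb k * x) = emb k * \<mu> x" for k x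
    using ED_zmul[OF E, of k "bS x"] by (simp add: hs jck_ops)
  have m1: "\<mu> 1 = 0" using M[of "bS 1" "bS 1"] by (simp add: hs jmul_def jck_ops)
  have m0: "\<mu> 0 = 0" using ma[of 0 0] by simp
  have mm1: "\<mu> (-1) = 0" using ma[of 1 "-1"] m1 m0 by simp
  have o1: "\<omega>1 1 = 0" using M[of "bW1 1" "bW1 1"] m1 by (simp add: hs jmul_def jck_ops; metis two_cancel)
  have o2: "\<omega>2 1 = 0" using M[of "bW2 1" "bW2 1"] m1 by (simp add: hs jmul_def jck_ops; metis two_cancel)
  have o3: "\<omega>3 1 = 0" using M[of "bW3 1" "bW3 1"] mm1 by (simp add: hs jmul_def jck_ops; metis two_cancel)
  have a: "\<xi> 1 = a" unfolding a_def \<xi>_def xJ_def ..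
  have c1: "\<chi>1 1 = - a" using M[of "bX1 1" "bX 1"] o1 a by (simp add: hs jmul_def jck_ops; metis add.commute eq_neg_iff_add_eq_0)
  have c2: "\<chi>2 1 = - a" using M[of "bX2 1" "bX 1"] o2 a by (simp add: hs jmul_def jck_ops; metis add.commute eq_neg_iff_add_eq_0)
  have c3: "\<chi>3 1 = - a" using M[of "bX3 1" "bX 1"] o3 a by (simp add: hs jmul_def jck_ops; metis add.commute eq_neg_iff_add_eq_0)
  have O1: "\<omega>1 f = \<mu> f" for f using M[of "bS f" "bW1 1"] o1 by (simp add: hs jmul_def jck_ops)
  have O2: "\<omega>2 f = \<mu> f" for f using M[of "bS f" "bW2 1"] o2 by (simp add: hs jmul_def jck_ops)
  have O3: "\<omega>3 f = \<mu> f" for f using M[of "bS f" "bW3 1"] o3 by (simp add: hs jmul_def jck_ops)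
  have Xi: "\<xi> f = \<mu> f + a * f" for f using M[of "bS f" "bX 1"] a by (simp add: hs jmul_def jck_ops algebra_simps)
  have C1: "\<chi>1 f = \<mu> f - a * f" for f using M[of "bS f" "bX1 1"] c1 by (simp add: hs jmul_def jck_ops algebra_simps)
  have C2: "\<chi>2 f = \<mu> f - a * f" for f using M[of "bS f" "bX2 1"] c2 by (simp add: hs jmul_def jck_ops algebra_simps)
  have C3: "\<chi>3 f = \<mu> f - a * f" for f using M[of "bS f" "bX3 1"] c3 by (simp add: hs jmul_def jck_ops algebra_simps)
  have mm: "\<mu> (x * y) = \<mu> x * y + x * \<mu> y" for x y
    using M[of "bS x" "bS y"] by (simp add: hs jmul_def jck_ops algebra_simps)
  have md: "\<mu> (\<delta> x) = \<delta> (\<mu> x) + 2 * a * \<delta> x" for x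
    using M[of "bX x" "bX 1"] m1 by (simp add: hs Xi a jmul_def jck_ops algebra_simps)
  have "d e = Tm \<mu> a e" for e
  proof -
    have "d e = d (bS (sc e)) + (d (bW1 (w1c e)) + (d (bW2 (w2c e)) + (d (bW3 (w3c e)) +
      (d (bX (xc e)) + (d (bX1 (x1c e)) + (d (bX2 (x2c e)) + d (bX3 (x3c e))))))))"
      by (subst jck_dec[of e]) (simp only: ED_add[OF E])
    thus ?thesis by (simp add: hs O1 O2 O3 Xi C1 C2 C3 Tm_def jck_ops)
  qed
  thus ?thesis using ma ml mm md m1 by blast
qed

lemma cls10:
  assumes dd: "d \<in> DerJ0 emb \<delta> (True,False)"
  shows "d = E10 \<delta> (w3c (d w2J))"
proof -
  have E: "d \<in> EvenDerJ emb \<delta>" using dd by (rule DJ_E)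
  have g: "\<And>y \<beta>. y \<in> gcomp \<beta> \<Longrightarrow> d y \<in> gcomp (gadd (True,False) \<beta>)" using DJ_g[OF dd] by simp
  define \<phi> where "\<phi> f = w1c (d (bS f))" for f
  define \<xi> where "\<xi> f = x1c (d (bX f))" for f
  define \<omega>1 where "\<omega>1 f = sc (d (bW1 f))" for f
  define \<omega>2 where "\<omega>2 f = w3c (d (bW2 f))" for f
  define \<omega>3 where "\<omega>3 f = w2c (d (bW3 f))" for f
  define \<chi>1 where "\<chi>1 f = xc (d (bX1 f))" for f
  define \<chi>2 where "\<chi>2 f = x3c (d (bX2 f))" for f
  define \<chi>3 where "\<chi>3 f = x2c (d (bX3 f))" for f
  have hS: "d (bS f) = bW1 (\<phi> f)" for f unfolding \<phi>_def
    apply (rule shapeTF0)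
    using g[of "bS f" "(False,False)"] inS[of f] apply (simp add: gadd_def)
    using ED_J0[OF E, of "bS f"] inS[of f] by (simp add: J0_def)
  have hX: "d (bX f) = bX1 (\<xi> f)" for f unfolding \<xi>_def
    apply (rule shapeTF1)
    using g[of "bX f" "(False,False)"] inX[of f] apply (simp add: gadd_def)
    using ED_J1[OF E, of "bX f"] inX[of f] by (simp add: J1_def)
  have hW1: "d (bW1 f) = bS (\<omega>1 f)" for f unfolding \<omega>1_def
    apply (rule shapeFF0)
    using g[of "bW1 f" "(True,False)"] inW1[of f] apply (simp add: gadd_def)
    using ED_J0[OF E, of "bW1 f"] inW1[of f] by (simp add: J0_def)
  have hX1: "d (bX1 f) = bX (\<chi>1 f)" for f unfolding \<chi>1_def
    apply (rule shapeFF1)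
    using g[of "bX1 f" "(True,False)"] inX1[of f] apply (simp add: gadd_def)
    using ED_J1[OF E, of "bX1 f"] inX1[of f] by (simp add: J1_def)
  have hW2: "d (bW2 f) = bW3 (\<omega>2 f)" for f unfolding \<omega>2_def
    apply (rule shapeTT0)
    using g[of "bW2 f" "(False,True)"] inW2[of f] apply (simp add: gadd_def)
    using ED_J0[OF E, of "bW2 f"] inW2[of f] by (simp add: J0_def)
  have hX2: "d (bX2 f) = bX3 (\<chi>2 f)" for f unfolding \<chi>2_def
    apply (rule shapeTT1)
    using g[of "bX2 f" "(False,True)"] inX2[of f] apply (simp add: gadd_def)
    using ED_J1[OF E, of "bX2 f"] inX2[of f] by (simp add: J1_def)
  have hW3: "d (bW3 f) = bW2 (\<omega>3 f)" for f unfolding \<omega>3_def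
    apply (rule shapeFT0)
    using g[of "bW3 f" "(True,True)"] inW3[of f] apply (simp add: gadd_def)
    using ED_J0[OF E, of "bW3 f"] inW3[of f] by (simp add: J0_def)
  have hX3: "d (bX3 f) = bX2 (\<chi>3 f)" for f unfolding \<chi>3_def
    apply (rule shapeFT1)
    using g[of "bX3 f" "(True,True)"] inX3[of f] apply (simp add: gadd_def)
    using ED_J1[OF E, of "bX3 f"] inX3[of f] by (simp add: J1_def)
  note hs = hS hX hW1 hW2 hW3 hX1 hX2 hX3
  note M = ED_mul[OF E]
  note Z = ED_0[OF E]
  have o1: "\<omega>1 1 = 0" using M[of "bW2 1" "bW1 1"] Z by (simp add: hs jmul_def jck_ops)
  have c1: "\<chi>1 1 = 0" using M[of "bW2 1" "bX3 1"] by (simp add: hs jmul_def jck_ops)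
  have O1: "\<omega>1 f = \<phi> f" for f using M[of "bS f" "bW1 1"] o1 by (simp add: hs jmul_def jck_ops)
  have C1: "\<chi>1 f = 0" for f using M[of "bS f" "bX1 1"] c1 by (simp add: hs jmul_def jck_ops)
  have ph: "\<phi> f = 0" for f using M[of "bW1 f" "bX 1"] C1 O1 by (simp add: hs jmul_def jck_ops)
  define p where "p = \<omega>2 1"
  have xi1: "\<xi> 1 = - \<delta> p" using M[of "bW2 1" "bX 1"] Z unfolding p_def by (simp add: hs jmul_def jck_ops; metis add.commute eq_neg_iff_add_eq_0)
  have o3: "\<omega>3 1 = p" using M[of "bW2 1" "bW3 1"] Z unfolding p_def by (simp add: hs jmul_def jck_ops)
  have c2: "\<chi>2 1 = p" using M[of "bW3 1" "bX1 1"] c1 o3 by (simp add: hs jmul_def jck_ops)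
  have c3: "\<chi>3 1 = p" using M[of "bW2 1" "bX1 1"] c1 unfolding p_def by (simp add: hs jmul_def jck_ops)
  have Xi: "\<xi> f = - (\<delta> p * f)" for f using M[of "bS f" "bX 1"] ph xi1 by (simp add: hs jmul_def jck_ops)
  have O2: "\<omega>2 f = p * f" for f using M[of "bS f" "bW2 1"] ph unfolding p_def by (simp add: hs jmul_def jck_ops)
  have O3: "\<omega>3 f = p * f" for f using M[of "bS f" "bW3 1"] ph o3 by (simp add: hs jmul_def jck_ops)
  have C2: "\<chi>2 f = p * f" for f using M[of "bS f" "bX2 1"] ph c2 by (simp add: hs jmul_def jck_ops)
  have C3: "\<chi>3 f = p * f" for f using M[of "bS f" "bX3 1"] ph c3 by (simp add: hs jmul_def jck_ops)
  have pw: "p = w3c (d w2J)" unfolding p_def \<omega>2_def w2J_def ..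
  have "d e = E10 \<delta> p e" for e
  proof -
    have "d e = d (bS (sc e)) + (d (bW1 (w1c e)) + (d (bW2 (w2c e)) + (d (bW3 (w3c e)) +
      (d (bX (xc e)) + (d (bX1 (x1c e)) + (d (bX2 (x2c e)) + d (bX3 (x3c e))))))))"
      by (subst jck_dec[of e]) (simp only: ED_add[OF E])
    thus ?thesis by (simp add: hs ph O1 O2 O3 Xi C1 C2 C3 E10_def jck_ops algebra_simps)
  qed
  thus ?thesis using pw by blast
qed

lemma cls01:
  assumes dd: "d \<in> DerJ0 emb \<delta> (False,True)"
  shows "d = E01 \<delta> (w3c (d w1J))"
proof -
  have E: "d \<in> EvenDerJ emb \<delta>" using dd by (rule DJ_E)
  have g: "\<And>y \<beta>. y \<in> gcomp \<beta> \<Longrightarrow> d y \<in> gcomp (gadd (False,True) \<beta>)" using DJ_g[OF dd] by simp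
  define \<phi> where "\<phi> f = w2c (d (bS f))" for f
  define \<xi> where "\<xi> f = x2c (d (bX f))" for f
  define \<omega>1 where "\<omega>1 f = w3c (d (bW1 f))" for f
  define \<omega>2 where "\<omega>2 f = sc (d (bW2 f))" for f
  define \<omega>3 where "\<omega>3 f = w1c (d (bW3 f))" for f
  define \<chi>1 where "\<chi>1 f = x3c (d (bX1 f))" for f
  define \<chi>2 where "\<chi>2 f = xc (d (bX2 f))" for f
  define \<chi>3 where "\<chi>3 f = x1c (d (bX3 f))" for f
  have hS: "d (bS f) = bW2 (\<phi> f)" for f unfolding \<phi>_def
    apply (rule shapeFT0)
    using g[of "bS f" "(False,False)"] inS[of f] apply (simp add: gadd_def)
    using ED_J0[OF E, of "bS f"] inS[of f] by (simp add: J0_def)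
  have hX: "d (bX f) = bX2 (\<xi> f)" for f unfolding \<xi>_def
    apply (rule shapeFT1)
    using g[of "bX f" "(False,False)"] inX[of f] apply (simp add: gadd_def)
    using ED_J1[OF E, of "bX f"] inX[of f] by (simp add: J1_def)
  have hW1: "d (bW1 f) = bW3 (\<omega>1 f)" for f unfolding \<omega>1_def
    apply (rule shapeTT0)
    using g[of "bW1 f" "(True,False)"] inW1[of f] apply (simp add: gadd_def)
    using ED_J0[OF E, of "bW1 f"] inW1[of f] by (simp add: J0_def)
  have hX1: "d (bX1 f) = bX3 (\<chi>1 f)" for f unfolding \<chi>1_def
    apply (rule shapeTT1)
    using g[of "bX1 f" "(True,False)"] inX1[of f] apply (simp add: gadd_def)
    using ED_J1[OF E, of "bX1 f"] inX1[of f] by (simp add: J1_def)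
  have hW2: "d (bW2 f) = bS (\<omega>2 f)" for f unfolding \<omega>2_def
    apply (rule shapeFF0)
    using g[of "bW2 f" "(False,True)"] inW2[of f] apply (simp add: gadd_def)
    using ED_J0[OF E, of "bW2 f"] inW2[of f] by (simp add: J0_def)
  have hX2: "d (bX2 f) = bX (\<chi>2 f)" for f unfolding \<chi>2_def
    apply (rule shapeFF1)
    using g[of "bX2 f" "(False,True)"] inX2[of f] apply (simp add: gadd_def)
    using ED_J1[OF E, of "bX2 f"] inX2[of f] by (simp add: J1_def)
  have hW3: "d (bW3 f) = bW1 (\<omega>3 f)" for f unfolding \<omega>3_def
    apply (rule shapeTF0)
    using g[of "bW3 f" "(True,True)"] inW3[of f] apply (simp add: gadd_def)
    using ED_J0[OF E, of "bW3 f"] inW3[of f] by (simp add: J0_def)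
  have hX3: "d (bX3 f) = bX1 (\<chi>3 f)" for f unfolding \<chi>3_def
    apply (rule shapeTF1)
    using g[of "bX3 f" "(True,True)"] inX3[of f] apply (simp add: gadd_def)
    using ED_J1[OF E, of "bX3 f"] inX3[of f] by (simp add: J1_def)
  note hs = hS hX hW1 hW2 hW3 hX1 hX2 hX3
  note M = ED_mul[OF E]
  note Z = ED_0[OF E]
  have o2: "\<omega>2 1 = 0" using M[of "bW1 1" "bW2 1"] Z by (simp add: hs jmul_def jck_ops)
  have c2: "\<chi>2 1 = 0" using M[of "bW3 1" "bX1 1"] by (simp add: hs jmul_def jck_ops)
  have O2: "\<omega>2 f = \<phi> f" for f using M[of "bS f" "bW2 1"] o2 by (simp add: hs jmul_def jck_ops)
  have C2: "\<chi>2 f = 0" for f using M[of "bS f" "bX2 1"] c2 by (simp add: hs jmul_def jck_ops)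
  have ph: "\<phi> f = 0" for f using M[of "bW2 f" "bX 1"] C2 O2 by (simp add: hs jmul_def jck_ops)
  define p where "p = \<omega>1 1"
  have xi1: "\<xi> 1 = \<delta> p" using M[of "bW1 1" "bX 1"] Z unfolding p_def by (simp add: hs jmul_def jck_ops)
  have o3: "\<omega>3 1 = p" using M[of "bW1 1" "bW3 1"] Z unfolding p_def by (simp add: hs jmul_def jck_ops)
  have Xi: "\<xi> f = \<delta> p * f" for f using M[of "bS f" "bX 1"] ph xi1 by (simp add: hs jmul_def jck_ops)
  have O1: "\<omega>1 f = p * f" for f using M[of "bS f" "bW1 1"] ph unfolding p_def by (simp add: hs jmul_def jck_ops)
  have O3: "\<omega>3 f = p * f" for f using M[of "bS f" "bW3 1"] ph o3 by (simp add: hs jmul_def jck_ops)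
  have C1': "\<chi>1 f = \<chi>1 1 * f" for f using M[of "bS f" "bX1 1"] ph by (simp add: hs jmul_def jck_ops)
  have C3': "\<chi>3 f = \<chi>3 1 * f" for f using M[of "bS f" "bX3 1"] ph by (simp add: hs jmul_def jck_ops)
  have c1: "\<chi>1 1 = p" using M[of "bW3 1" "bX2 1"] C1'[of "-1"] c2 o3 by (simp add: hs jmul_def jck_ops)
  have c3: "\<chi>3 1 = p" using M[of "bW2 1" "bX3 1"] c1 o2 by (simp add: hs jmul_def jck_ops)
  have C1: "\<chi>1 f = p * f" for f using C1'[of f] c1 by (simp add: mult.commute)
  have C3: "\<chi>3 f = p * f" for f using C3'[of f] c3 by (simp add: mult.commute)
  have pw: "p = w3c (d w1J)" unfolding p_def \<omega>1_def w1J_def ..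
  have "d e = E01 \<delta> p e" for e
  proof -
    have "d e = d (bS (sc e)) + (d (bW1 (w1c e)) + (d (bW2 (w2c e)) + (d (bW3 (w3c e)) +
      (d (bX (xc e)) + (d (bX1 (x1c e)) + (d (bX2 (x2c e)) + d (bX3 (x3c e))))))))"
      by (subst jck_dec[of e]) (simp only: ED_add[OF E])
    thus ?thesis by (simp add: hs ph O1 O2 O3 Xi C1 C2 C3 E01_def jck_ops algebra_simps)
  qed
  thus ?thesis using pw by blast
qed

lemma cls11:
  assumes dd: "d \<in> DerJ0 emb \<delta> (True,True)"
  shows "d = E11 \<delta> (w1c (d w2J))"
proof -
  have E: "d \<in> EvenDerJ emb \<delta>" using dd by (rule DJ_E)
  have g: "\<And>y \<beta>. y \<in> gcomp \<beta> \<Longrightarrow> d y \<in> gcomp (gadd (True,True) \<beta>)" using DJ_g[OF dd] by simp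
  define \<phi> where "\<phi> f = w3c (d (bS f))" for f
  define \<xi> where "\<xi> f = x3c (d (bX f))" for f
  define \<omega>1 where "\<omega>1 f = w2c (d (bW1 f))" for f
  define \<omega>2 where "\<omega>2 f = w1c (d (bW2 f))" for f
  define \<omega>3 where "\<omega>3 f = sc (d (bW3 f))" for f
  define \<chi>1 where "\<chi>1 f = x2c (d (bX1 f))" for f
  define \<chi>2 where "\<chi>2 f = x1c (d (bX2 f))" for f
  define \<chi>3 where "\<chi>3 f = xc (d (bX3 f))" for f
  have hS: "d (bS f) = bW3 (\<phi> f)" for f unfolding \<phi>_def
    apply (rule shapeTT0)
    using g[of "bS f" "(False,False)"] inS[of f] apply (simp add: gadd_def)
    using ED_J0[OF E, of "bS f"] inS[of f] by (simp add: J0_def)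
  have hX: "d (bX f) = bX3 (\<xi> f)" for f unfolding \<xi>_def
    apply (rule shapeTT1)
    using g[of "bX f" "(False,False)"] inX[of f] apply (simp add: gadd_def)
    using ED_J1[OF E, of "bX f"] inX[of f] by (simp add: J1_def)
  have hW1: "d (bW1 f) = bW2 (\<omega>1 f)" for f unfolding \<omega>1_def
    apply (rule shapeFT0)
    using g[of "bW1 f" "(True,False)"] inW1[of f] apply (simp add: gadd_def)
    using ED_J0[OF E, of "bW1 f"] inW1[of f] by (simp add: J0_def)
  have hX1: "d (bX1 f) = bX2 (\<chi>1 f)" for f unfolding \<chi>1_def
    apply (rule shapeFT1)
    using g[of "bX1 f" "(True,False)"] inX1[of f] apply (simp add: gadd_def)
    using ED_J1[OF E, of "bX1 f"] inX1[of f] by (simp add: J1_def)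
  have hW2: "d (bW2 f) = bW1 (\<omega>2 f)" for f unfolding \<omega>2_def
    apply (rule shapeTF0)
    using g[of "bW2 f" "(False,True)"] inW2[of f] apply (simp add: gadd_def)
    using ED_J0[OF E, of "bW2 f"] inW2[of f] by (simp add: J0_def)
  have hX2: "d (bX2 f) = bX1 (\<chi>2 f)" for f unfolding \<chi>2_def
    apply (rule shapeTF1)
    using g[of "bX2 f" "(False,True)"] inX2[of f] apply (simp add: gadd_def)
    using ED_J1[OF E, of "bX2 f"] inX2[of f] by (simp add: J1_def)
  have hW3: "d (bW3 f) = bS (\<omega>3 f)" for f unfolding \<omega>3_def
    apply (rule shapeFF0)
    using g[of "bW3 f" "(True,True)"] inW3[of f] apply (simp add: gadd_def)
    using ED_J0[OF E, of "bW3 f"] inW3[of f] by (simp add: J0_def)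
  have hX3: "d (bX3 f) = bX (\<chi>3 f)" for f unfolding \<chi>3_def
    apply (rule shapeFF1)
    using g[of "bX3 f" "(True,True)"] inX3[of f] apply (simp add: gadd_def)
    using ED_J1[OF E, of "bX3 f"] inX3[of f] by (simp add: J1_def)
  note hs = hS hX hW1 hW2 hW3 hX1 hX2 hX3
  note M = ED_mul[OF E]
  note Z = ED_0[OF E]
  have o3: "\<omega>3 1 = 0" using M[of "bW1 1" "bW3 1"] Z by (simp add: hs jmul_def jck_ops)
  have c3: "\<chi>3 1 = 0" using M[of "bW2 1" "bX1 1"] by (simp add: hs jmul_def jck_ops)
  have O3: "\<omega>3 f = - \<phi> f" for f using M[of "bS f" "bW3 1"] o3 by (simp add: hs jmul_def jck_ops)
  have C3: "\<chi>3 f = 0" for f using M[of "bS f" "bX3 1"] c3 by (simp add: hs jmul_def jck_ops)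
  have ph: "\<phi> f = 0" for f using M[of "bW3 f" "bX 1"] C3 O3 by (simp add: hs jmul_def jck_ops)
  define p where "p = \<omega>2 1"
  have xi1: "\<xi> 1 = - \<delta> p" using M[of "bW2 1" "bX 1"] Z unfolding p_def by (simp add: hs jmul_def jck_ops; metis add.commute eq_neg_iff_add_eq_0)
  have o1: "\<omega>1 1 = - p" using M[of "bW1 1" "bW2 1"] Z unfolding p_def by (simp add: hs jmul_def jck_ops; metis add.commute eq_neg_iff_add_eq_0)
  have c1: "\<chi>1 1 = - p" using M[of "bW2 1" "bX3 1"] C3 unfolding p_def by (simp add: hs jmul_def jck_ops)
  have c2: "\<chi>2 1 = p" using M[of "bW3 1" "bX1 1"] c1 O3 ph by (simp add: hs jmul_def jck_ops)
  have Xi: "\<xi> f = - (\<delta> p * f)" for f using M[of "bS f" "bX 1"] ph xi1 by (simp add: hs jmul_def jck_ops)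
  have O1: "\<omega>1 f = - (p * f)" for f using M[of "bS f" "bW1 1"] ph o1 by (simp add: hs jmul_def jck_ops)
  have O2: "\<omega>2 f = p * f" for f using M[of "bS f" "bW2 1"] ph unfolding p_def by (simp add: hs jmul_def jck_ops)
  have C1: "\<chi>1 f = - (p * f)" for f using M[of "bS f" "bX1 1"] ph c1 by (simp add: hs jmul_def jck_ops)
  have C2: "\<chi>2 f = p * f" for f using M[of "bS f" "bX2 1"] ph c2 by (simp add: hs jmul_def jck_ops)
  have pw: "p = w1c (d w2J)" unfolding p_def \<omega>2_def w2J_def ..
  have "d e = E11 \<delta> p e" for e
  proof -
    have "d e = d (bS (sc e)) + (d (bW1 (w1c e)) + (d (bW2 (w2c e)) + (d (bW3 (w3c e)) +
      (d (bX (xc e)) + (d (bX1 (x1c e)) + (d (bX2 (x2c e)) + d (bX3 (x3c e))))))))"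
      by (subst jck_dec[of e]) (simp only: ED_add[OF E])
    thus ?thesis by (simp add: hs ph O1 O2 O3 Xi C1 C2 C3 E11_def jck_ops algebra_simps)
  qed
  thus ?thesis using pw by blast
qed


lemma Tm_in:
  assumes ma: "\<And>x y. \<mu> (x + y) = \<mu> x + \<mu> y"
    and ml: "\<And>k x. \<mu> (emb k * x) = emb k * \<mu> x"
    and mm: "\<And>x y. \<mu> (x * y) = \<mu> x * y + x * \<mu> y"
    and md: "\<And>x. \<mu> (\<delta> x) = \<delta> (\<mu> x) + 2 * a * \<delta> x"
  shows "Tm \<mu> a \<in> DerJ0 emb \<delta> (False,False)"
proof -
  have m0: "\<mu> 0 = 0" using ma[of 0 0] by simp
  have "flin emb (Tm \<mu> a) UNIV" unfolding flin_def Tm_def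
    by (simp add: ma ml jck_ops) (simp add: algebra_simps)
  moreover have "\<forall>u\<in>J0. Tm \<mu> a u \<in> J0" "\<forall>u\<in>J1. Tm \<mu> a u \<in> J1"
    by (simp_all add: J0_def J1_def Tm_def m0)
  moreover have "\<forall>u v. Tm \<mu> a (jmul \<delta> u v) = jmul \<delta> (Tm \<mu> a u) v + jmul \<delta> u (Tm \<mu> a v)"
    using Tm_der[OF ma mm md] by blast
  ultimately have "Tm \<mu> a \<in> EvenDerJ emb \<delta>" unfolding EvenDerJ_def by blast
  moreover have "\<forall>\<beta>. \<forall>u\<in>gcomp \<beta>. Tm \<mu> a u \<in> gcomp (gadd (False,False) \<beta>)"
  proof (intro allI)
    fix \<beta> :: "bool \<times> bool" show "\<forall>u\<in>gcomp \<beta>. Tm \<mu> a u \<in> gcomp (gadd (False,False) \<beta>)"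
      by (cases \<beta>; cases "fst \<beta>"; cases "snd \<beta>") (auto simp: gadd_def Tm_def m0)
  qed
  ultimately show ?thesis unfolding DerJ0_def by blast
qed

lemma E10_in: "E10 \<delta> p \<in> DerJ0 emb \<delta> (True,False)"
proof -
  have "flin emb (E10 \<delta> p) UNIV" unfolding flin_def E10_def
    by (simp add: jck_ops algebra_simps)
  moreover have "\<forall>u\<in>J0. E10 \<delta> p u \<in> J0" "\<forall>u\<in>J1. E10 \<delta> p u \<in> J1"
    by (simp_all add: J0_def J1_def E10_def)
  moreover have "\<forall>u v. E10 \<delta> p (jmul \<delta> u v) = jmul \<delta> (E10 \<delta> p u) v + jmul \<delta> u (E10 \<delta> p v)"
    using E10_der by blast
  ultimately have "E10 \<delta> p \<in> EvenDerJ emb \<delta>" unfolding EvenDerJ_def by blast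
  moreover have "\<forall>\<beta>. \<forall>u\<in>gcomp \<beta>. E10 \<delta> p u \<in> gcomp (gadd (True,False) \<beta>)"
  proof (intro allI)
    fix \<beta> :: "bool \<times> bool" show "\<forall>u\<in>gcomp \<beta>. E10 \<delta> p u \<in> gcomp (gadd (True,False) \<beta>)"
      by (cases \<beta>; cases "fst \<beta>"; cases "snd \<beta>") (auto simp: gadd_def E10_def)
  qed
  ultimately show ?thesis unfolding DerJ0_def by blast
qed

lemma E01_in: "E01 \<delta> p \<in> DerJ0 emb \<delta> (False,True)"
proof -
  have "flin emb (E01 \<delta> p) UNIV" unfolding flin_def E01_def
    by (simp add: jck_ops algebra_simps)
  moreover have "\<forall>u\<in>J0. E01 \<delta> p u \<in> J0" "\<forall>u\<in>J1. E01 \<delta> p u \<in> J1"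
    by (simp_all add: J0_def J1_def E01_def)
  moreover have "\<forall>u v. E01 \<delta> p (jmul \<delta> u v) = jmul \<delta> (E01 \<delta> p u) v + jmul \<delta> u (E01 \<delta> p v)"
    using E01_der by blast
  ultimately have "E01 \<delta> p \<in> EvenDerJ emb \<delta>" unfolding EvenDerJ_def by blast
  moreover have "\<forall>\<beta>. \<forall>u\<in>gcomp \<beta>. E01 \<delta> p u \<in> gcomp (gadd (False,True) \<beta>)"
  proof (intro allI)
    fix \<beta> :: "bool \<times> bool" show "\<forall>u\<in>gcomp \<beta>. E01 \<delta> p u \<in> gcomp (gadd (False,True) \<beta>)"
      by (cases \<beta>; cases "fst \<beta>"; cases "snd \<beta>") (auto simp: gadd_def E01_def)
  qed
  ultimately show ?thesis unfolding DerJ0_def by blast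
qed

lemma E11_in: "E11 \<delta> p \<in> DerJ0 emb \<delta> (True,True)"
proof -
  have "flin emb (E11 \<delta> p) UNIV" unfolding flin_def E11_def
    by (simp add: jck_ops algebra_simps)
  moreover have "\<forall>u\<in>J0. E11 \<delta> p u \<in> J0" "\<forall>u\<in>J1. E11 \<delta> p u \<in> J1"
    by (simp_all add: J0_def J1_def E11_def)
  moreover have "\<forall>u v. E11 \<delta> p (jmul \<delta> u v) = jmul \<delta> (E11 \<delta> p u) v + jmul \<delta> u (E11 \<delta> p v)"
    using E11_der by blast
  ultimately have "E11 \<delta> p \<in> EvenDerJ emb \<delta>" unfolding EvenDerJ_def by blast
  moreover have "\<forall>\<beta>. \<forall>u\<in>gcomp \<beta>. E11 \<delta> p u \<in> gcomp (gadd (True,True) \<beta>)"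
  proof (intro allI)
    fix \<beta> :: "bool \<times> bool" show "\<forall>u\<in>gcomp \<beta>. E11 \<delta> p u \<in> gcomp (gadd (True,True) \<beta>)"
      by (cases \<beta>; cases "fst \<beta>"; cases "snd \<beta>") (auto simp: gadd_def E11_def)
  qed
  ultimately show ?thesis unfolding DerJ0_def by blast
qed

lemma triv_fun: "(1::'z) = 0 \<Longrightarrow> (F::'z jck \<Rightarrow> 'z jck) = G"
proof -
  assume h: "(1::'z) = 0"
  have "\<And>x y::'z. x = y" by (metis h mult_1 mult_zero_left)
  thus ?thesis by (intro ext) (metis jck.expand)
qed

lemma Dop_x: "Dop \<delta> xJ (zmul h xJ) = Tm (\<lambda>z. - (2 * h * \<delta> z)) (\<delta> h)"
  unfolding Dop_def xJ_def zmul_def J1_def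
  by (intro ext) (simp add: jmul_def Tm_def jck_ops algebra_simps)

lemma Dop_w23: "Dop \<delta> w2J (zmul h w3J) = E10 \<delta> (- h)"
proof (cases "(1::'z) = 0")
  case True thus ?thesis by (rule triv_fun)
next
  case False
  hence "w2J \<notin> (J1::'z jck set)" by (simp add: w2J_def J1_def)
  thus ?thesis unfolding Dop_def w2J_def w3J_def zmul_def
    by (intro ext) (simp add: jmul_def E10_def jck_ops algebra_simps)
qed

lemma Dop_w31: "Dop \<delta> w3J (zmul h w1J) = E01 \<delta> h"
proof (cases "(1::'z) = 0")
  case True thus ?thesis by (rule triv_fun)
next
  case False
  hence "w3J \<notin> (J1::'z jck set)" by (simp add: w3J_def J1_def)
  thus ?thesis unfolding Dop_def w3J_def w1J_def zmul_def
    by (intro ext) (simp add: jmul_def E01_def jck_ops algebra_simps)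
qed

lemma Dop_w12: "Dop \<delta> w1J (zmul h w2J) = E11 \<delta> h"
proof (cases "(1::'z) = 0")
  case True thus ?thesis by (rule triv_fun)
next
  case False
  hence "w1J \<notin> (J1::'z jck set)" by (simp add: w1J_def J1_def)
  thus ?thesis unfolding Dop_def w1J_def w2J_def zmul_def
    by (intro ext) (simp add: jmul_def E11_def jck_ops algebra_simps)
qed

lemma spanF_induct[consumes 1]:
  assumes "d \<in> spanF emb S" and "P (\<lambda>c. 0)"
    and "\<And>d' g k. P d' \<Longrightarrow> g \<in> S \<Longrightarrow> P (\<lambda>c. d' c + zmul (emb k) (g c))"
  shows "P d"
proof -
  obtain n :: nat and k g where d: "d = (\<lambda>c. \<Sum>i<n. zmul (emb (k i)) (g i c))" and g: "\<forall>i<n. g i \<in> S"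
    using assms(1) unfolding spanF_def by blast
  have "\<forall>m\<le>n. P (\<lambda>c. \<Sum>i<m. zmul (emb (k i)) (g i c))"
  proof (intro allI impI)
    fix m assume "m \<le> n" thus "P (\<lambda>c. \<Sum>i<m. zmul (emb (k i)) (g i c))"
    proof (induct m)
      case 0 thus ?case using assms(2) by simp
    next
      case (Suc m)
      hence "P (\<lambda>c. \<Sum>i<m. zmul (emb (k i)) (g i c))" by simp
      from assms(3)[OF this, of "g m" "k m"] g Suc(2) show ?case by simp
    qed
  qed
  thus ?thesis using d by simp
qed

lemma zmul1[simp]: "zmul 1 x = x" by (simp add: zmul_def)

lemma spanF_single: "g \<in> S \<Longrightarrow> g \<in> spanF emb S"
  unfolding spanF_def
  by (rule CollectI, rule exI[of _ 1], rule exI[of _ "\<lambda>_. 1"], rule exI[of _ "\<lambda>_. g"]) simp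

lemma spanF_mono: "S \<subseteq> S' \<Longrightarrow> spanF emb S \<subseteq> spanF emb S'"
  unfolding spanF_def by blast







lemma span_x: "spanF emb {Dop \<delta> xJ (zmul f xJ) | f. True} = {Tm (\<lambda>z. - (2 * G * \<delta> z)) (\<delta> G) | G. True}"
proof
  show "spanF emb {Dop \<delta> xJ (zmul f xJ) | f. True} \<subseteq> {Tm (\<lambda>z. - (2 * G * \<delta> z)) (\<delta> G) | G. True}"
  proof
    fix d assume "d \<in> spanF emb {Dop \<delta> xJ (zmul f xJ) | f. True}"
    thus "d \<in> {Tm (\<lambda>z. - (2 * G * \<delta> z)) (\<delta> G) | G. True}"
    proof (induct rule: spanF_induct)
      case 1
      have "(\<lambda>c. 0) = Tm (\<lambda>z. - (2 * 0 * \<delta> z)) (\<delta> 0)" by (intro ext) (simp add: Tm_def jck_ops)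
      thus ?case by blast
    next
      case (2 d' g k)
      then obtain G where d': "d' = Tm (\<lambda>z. - (2 * G * \<delta> z)) (\<delta> G)" by blast
      from 2 obtain h where "g = Dop \<delta> xJ (zmul h xJ)" by blast
      hence g: "g = Tm (\<lambda>z. - (2 * h * \<delta> z)) (\<delta> h)" by (simp add: Dop_x)
      have "(\<lambda>c. d' c + zmul (emb k) (g c)) = Tm (\<lambda>z. - (2 * (G + emb k * h) * \<delta> z)) (\<delta> (G + emb k * h))"
        unfolding d' g by (intro ext) (simp add: Tm_def jck_ops algebra_simps)
      thus ?case by blast
    qed
  qed
next
  show "{Tm (\<lambda>z. - (2 * G * \<delta> z)) (\<delta> G) | G. True} \<subseteq> spanF emb {Dop \<delta> xJ (zmul f xJ) | f. True}"
  proof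
    fix d assume "d \<in> {Tm (\<lambda>z. - (2 * G * \<delta> z)) (\<delta> G) | G. True}"
    then obtain G where "d = Tm (\<lambda>z. - (2 * G * \<delta> z)) (\<delta> G)" by blast
    hence "d = Dop \<delta> xJ (zmul G xJ)" using Dop_x by simp
    hence "d \<in> {Dop \<delta> xJ (zmul f xJ) | f. True}" by blast
    thus "d \<in> spanF emb {Dop \<delta> xJ (zmul f xJ) | f. True}" by (rule spanF_single)
  qed
qed

lemma span_10: "spanF emb {Dop \<delta> w2J (zmul f w3J) | f. True} = {E10 \<delta> p | p. True}"
proof
  show "spanF emb {Dop \<delta> w2J (zmul f w3J) | f. True} \<subseteq> {E10 \<delta> p | p. True}"
  proof
    fix d assume "d \<in> spanF emb {Dop \<delta> w2J (zmul f w3J) | f. True}"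
    thus "d \<in> {E10 \<delta> p | p. True}"
    proof (induct rule: spanF_induct)
      case 1
      have "(\<lambda>c. 0) = E10 \<delta> 0" by (intro ext) (simp add: E10_def jck_ops)
      thus ?case by blast
    next
      case (2 d' g k)
      then obtain p where d': "d' = E10 \<delta> p" by blast
      from 2 obtain h where "g = Dop \<delta> w2J (zmul h w3J)" by blast
      hence g: "g = E10 \<delta> (- h)" by (simp add: Dop_w23)
      have "(\<lambda>c. d' c + zmul (emb k) (g c)) = E10 \<delta> (p + emb k * (- h))"
        unfolding d' g by (intro ext) (simp add: E10_def jck_ops algebra_simps)
      thus ?case by blast
    qed
  qed
next
  have "E10 \<delta> p = Dop \<delta> w2J (zmul (- p) w3J)" for p using Dop_w23[of "-p"] by simp
  hence "{E10 \<delta> p | p. True} \<subseteq> {Dop \<delta> w2J (zmul f w3J) | f. True}" by blast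
  thus "{E10 \<delta> p | p. True} \<subseteq> spanF emb {Dop \<delta> w2J (zmul f w3J) | f. True}"
    using spanF_single by blast
qed

lemma span_01: "spanF emb {Dop \<delta> w3J (zmul f w1J) | f. True} = {E01 \<delta> p | p. True}"
proof
  show "spanF emb {Dop \<delta> w3J (zmul f w1J) | f. True} \<subseteq> {E01 \<delta> p | p. True}"
  proof
    fix d assume "d \<in> spanF emb {Dop \<delta> w3J (zmul f w1J) | f. True}"
    thus "d \<in> {E01 \<delta> p | p. True}"
    proof (induct rule: spanF_induct)
      case 1
      have "(\<lambda>c. 0) = E01 \<delta> 0" by (intro ext) (simp add: E01_def jck_ops)
      thus ?case by blast
    next
      case (2 d' g k)
      then obtain p where d': "d' = E01 \<delta> p" by blast
      from 2 obtain h where "g = Dop \<delta> w3J (zmul h w1J)" by blast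
      hence g: "g = E01 \<delta> h" by (simp add: Dop_w31)
      have "(\<lambda>c. d' c + zmul (emb k) (g c)) = E01 \<delta> (p + emb k * h)"
        unfolding d' g by (intro ext) (simp add: E01_def jck_ops algebra_simps)
      thus ?case by blast
    qed
  qed
next
  show "{E01 \<delta> p | p. True} \<subseteq> spanF emb {Dop \<delta> w3J (zmul f w1J) | f. True}"
  proof
    fix d assume "d \<in> {E01 \<delta> p | p. True}"
    then obtain p where "d = Dop \<delta> w3J (zmul p w1J)" using Dop_w31 by auto
    hence "d \<in> {Dop \<delta> w3J (zmul f w1J) | f. True}" by blast
    thus "d \<in> spanF emb {Dop \<delta> w3J (zmul f w1J) | f. True}" by (rule spanF_single)
  qed
qed

lemma span_11: "spanF emb {Dop \<delta> w1J (zmul f w2J) | f. True} = {E11 \<delta> p | p. True}"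
proof
  show "spanF emb {Dop \<delta> w1J (zmul f w2J) | f. True} \<subseteq> {E11 \<delta> p | p. True}"
  proof
    fix d assume "d \<in> spanF emb {Dop \<delta> w1J (zmul f w2J) | f. True}"
    thus "d \<in> {E11 \<delta> p | p. True}"
    proof (induct rule: spanF_induct)
      case 1
      have "(\<lambda>c. 0) = E11 \<delta> 0" by (intro ext) (simp add: E11_def jck_ops)
      thus ?case by blast
    next
      case (2 d' g k)
      then obtain p where d': "d' = E11 \<delta> p" by blast
      from 2 obtain h where "g = Dop \<delta> w1J (zmul h w2J)" by blast
      hence g: "g = E11 \<delta> h" by (simp add: Dop_w12)
      have "(\<lambda>c. d' c + zmul (emb k) (g c)) = E11 \<delta> (p + emb k * h)"
        unfolding d' g by (intro ext) (simp add: E11_def jck_ops algebra_simps)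
      thus ?case by blast
    qed
  qed
next
  show "{E11 \<delta> p | p. True} \<subseteq> spanF emb {Dop \<delta> w1J (zmul f w2J) | f. True}"
  proof
    fix d assume "d \<in> {E11 \<delta> p | p. True}"
    then obtain p where "d = Dop \<delta> w1J (zmul p w2J)" using Dop_w12 by auto
    hence "d \<in> {Dop \<delta> w1J (zmul f w2J) | f. True}" by blast
    thus "d \<in> spanF emb {Dop \<delta> w1J (zmul f w2J) | f. True}" by (rule spanF_single)
  qed
qed

lemma Der10: "DerJ0 emb \<delta> (True,False) = {E10 \<delta> p | p. True}"
proof (intro set_eqI iffI)
  fix d assume "d \<in> DerJ0 emb \<delta> (True,False)"
  hence "d = E10 \<delta> (w3c (d w2J))" by (rule cls10)
  thus "d \<in> {E10 \<delta> p | p. True}" by blast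
next
  fix d assume "d \<in> {E10 \<delta> p | p. True}"
  then obtain p where "d = E10 \<delta> p" by blast
  thus "d \<in> DerJ0 emb \<delta> (True,False)" using E10_in by simp
qed
lemma Der01: "DerJ0 emb \<delta> (False,True) = {E01 \<delta> p | p. True}"
proof (intro set_eqI iffI)
  fix d assume "d \<in> DerJ0 emb \<delta> (False,True)"
  hence "d = E01 \<delta> (w3c (d w1J))" by (rule cls01)
  thus "d \<in> {E01 \<delta> p | p. True}" by blast
next
  fix d assume "d \<in> {E01 \<delta> p | p. True}"
  then obtain p where "d = E01 \<delta> p" by blast
  thus "d \<in> DerJ0 emb \<delta> (False,True)" using E01_in by simp
qed
lemma Der11: "DerJ0 emb \<delta> (True,True) = {E11 \<delta> p | p. True}"
proof (intro set_eqI iffI)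
  fix d assume "d \<in> DerJ0 emb \<delta> (True,True)"
  hence "d = E11 \<delta> (w1c (d w2J))" by (rule cls11)
  thus "d \<in> {E11 \<delta> p | p. True}" by blast
next
  fix d assume "d \<in> {E11 \<delta> p | p. True}"
  then obtain p where "d = E11 \<delta> p" by blast
  thus "d \<in> DerJ0 emb \<delta> (True,True)" using E11_in by simp
qed

lemma tildeD_Tm: "\<mu> 0 = 0 \<Longrightarrow> \<mu> 1 = 0 \<Longrightarrow> tildeD (Tm \<mu> a) = Tm \<mu> a"
  unfolding tildeD_def Tm_def xJ_def by (intro ext) (simp add: jck_ops Let_def)

lemma tildeD_check: "tildeD (checkK (\<lambda>z. f * \<delta> z) a) = Tm (\<lambda>z. f * \<delta> z) a"
  unfolding tildeD_def Tm_def xJ_def checkK_def by (intro ext) (simp add: jck_ops Let_def)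

lemma DerFF_K: "d \<in> DerJ0 emb \<delta> (False,False) \<Longrightarrow> d \<in> DerK0 emb \<delta>"
proof -
  assume dd: "d \<in> DerJ0 emb \<delta> (False,False)"
  have E: "d \<in> EvenDerJ emb \<delta>" using dd by (rule DJ_E)
  have g: "y \<in> Kset \<Longrightarrow> d y \<in> Kset" for y using DJ_g[OF dd, of y "(False,False)"]
    by (simp add: gadd_def Kset_def)
  show ?thesis unfolding DerK0_def K0_def K1_def flin_def
    using g ED_J0[OF E] ED_J1[OF E] ED_add[OF E] ED_zmul[OF E] ED_mul[OF E] by blast
qed

lemma clsK:
  assumes dd: "d \<in> DerK0 emb \<delta>"
  defines "\<mu> \<equiv> \<lambda>f. sc (d (bS f))" and "a \<equiv> xc (d xJ)"
  shows "tildeD d = Tm \<mu> a \<and> (\<forall>x y. \<mu> (x + y) = \<mu> x + \<mu> y) \<and> (\<forall>k x. \<mu> (emb k * x) = emb k * \<mu> x)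
     \<and> (\<forall>x y. \<mu> (x * y) = \<mu> x * y + x * \<mu> y) \<and> (\<forall>x. \<mu> (\<delta> x) = \<delta> (\<mu> x) + 2 * a * \<delta> x)
     \<and> \<mu> 1 = 0"
proof -
  have K0: "u \<in> K0 \<Longrightarrow> d u \<in> K0" and K1: "u \<in> K1 \<Longrightarrow> d u \<in> K1"
    and fl: "flin emb d Kset"
    and M: "u \<in> Kset \<Longrightarrow> v \<in> Kset \<Longrightarrow> d (jmul \<delta> u v) = jmul \<delta> (d u) v + jmul \<delta> u (d v)" for u v
    using dd unfolding DerK0_def by blast+
  have A: "u \<in> Kset \<Longrightarrow> v \<in> Kset \<Longrightarrow> d (u + v) = d u + d v" for u v using fl unfolding flin_def by blast
  have L: "u \<in> Kset \<Longrightarrow> d (zmul (emb k) u) = zmul (emb k) (d u)" for u k using fl unfolding flin_def by blast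
  have kS: "bS f \<in> Kset" for f by (simp add: Kset_def)
  have kX: "bX f \<in> Kset" for f by (simp add: Kset_def)
  have hS: "d (bS f) = bS (\<mu> f)" for f
  proof -
    have "d (bS f) \<in> K0" using K0[of "bS f"] by (simp add: K0_def Kset_def J0_def)
    thus ?thesis unfolding \<mu>_def K0_def Kset_def by (intro shapeFF0) auto
  qed
  have hX1: "d (bX 1) = bX a"
  proof -
    have "d (bX 1) \<in> K1" using K1[of "bX 1"] by (simp add: K1_def Kset_def J1_def)
    hence "d (bX 1) = bX (xc (d (bX 1)))" unfolding K1_def Kset_def by (intro shapeFF1) auto
    thus ?thesis unfolding a_def xJ_def .
  qed
  have hX: "d (bX f) = bX (\<mu> f + a * f)" for f
    using M[OF kS[of f] kX[of 1]] by (simp add: hS hX1 jmul_def jck_ops algebra_simps)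
  have ma: "\<mu> (x + y) = \<mu> x + \<mu> y" for x y
    using A[OF kS[of x] kS[of y]] by (simp add: hS jck_ops)
  have ml: "\<mu> (emb k * x) = emb k * \<mu> x" for k x
    using L[OF kS[of x], of k] by (simp add: hS jck_ops)
  have m1: "\<mu> 1 = 0" using M[OF kS[of 1] kS[of 1]] by (simp add: hS jmul_def jck_ops)
  have mm: "\<mu> (x * y) = \<mu> x * y + x * \<mu> y" for x y
    using M[OF kS[of x] kS[of y]] by (simp add: hS jmul_def jck_ops algebra_simps)
  have md: "\<mu> (\<delta> x) = \<delta> (\<mu> x) + 2 * a * \<delta> x" for x
    using M[OF kX[of x] kX[of 1]] m1 by (simp add: hS hX jmul_def jck_ops algebra_simps)
  have "tildeD d e = Tm \<mu> a e" for e
  proof -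
    have "d (bS (sc e) + bX (xc e)) = d (bS (sc e)) + d (bX (xc e))" using A[OF kS[of "sc e"] kX[of "xc e"]] by blast
    thus ?thesis unfolding tildeD_def Tm_def Let_def
      by (simp add: hS hX jck_ops xJ_def hX1[unfolded xJ_def] \<mu>_def[symmetric] m1 algebra_simps)
  qed
  thus ?thesis using ma ml mm md m1 by blast
qed

lemma Tm_cdelta:
  assumes c: "\<And>f. \<mu> f = c * \<delta> f" and md: "\<And>x. \<mu> (\<delta> x) = \<delta> (\<mu> x) + 2 * a * \<delta> x"
  shows "\<exists>G. Tm \<mu> a = Tm (\<lambda>z. - (2 * G * \<delta> z)) (\<delta> G)"
proof -
  have "(\<delta> c + 2 * a) * \<delta> x = 0 * \<delta> x" for x
    using md[of x] by (simp add: c algebra_simps)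
  hence e: "\<delta> c + 2 * a = 0" by (rule delta_cancel)
  obtain G where G: "2 * G = - c" using half by blast
  have "2 * (a - \<delta> G) = 0"
  proof -
    have "\<delta> (2 * G) = - \<delta> c" using G by simp
    hence "2 * \<delta> G = - \<delta> c" by simp
    thus ?thesis using e by (simp add: algebra_simps; metis add_left_cancel)
  qed
  hence a: "a = \<delta> G" using two_cancel[of "a - \<delta> G"] by simp
  have c': "c = - (2 * G)" using G by simp
  have "\<mu> = (\<lambda>z. - (2 * G * \<delta> z))"
    by (intro ext) (simp add: c c')
  thus ?thesis using a by blast
qed

lemma inv_Dop: "homog a \<Longrightarrow> homog b \<Longrightarrow> \<exists>c. \<forall>f. sc (Dop \<delta> a b (bS f)) = c * \<delta> f"
proof -
  assume ha: "homog a" and hb: "homog b"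
  show ?thesis
  proof (cases "a \<in> J1 \<and> b \<in> J1")
    case True
    hence "\<forall>f. sc (Dop \<delta> a b (bS f)) = (- (2 * xc a * xc b)) * \<delta> f"
      by (simp add: Dop_def jmul_def J1_def jck_ops algebra_simps)
    thus ?thesis by blast
  next
    case False
    hence D: "Dop \<delta> a b = (\<lambda>c. jmul \<delta> a (jmul \<delta> b c) - jmul \<delta> b (jmul \<delta> a c))"
      unfolding Dop_def using False by auto
    obtain s1 u1 u2 u3 y y1 y2 y3 where a: "a = JE s1 u1 u2 u3 y y1 y2 y3" by (cases a)
    obtain s1' u1' u2' u3' y' y1' y2' y3' where b: "b = JE s1' u1' u2' u3' y' y1' y2' y3'" by (cases b)
    have "a \<in> J0 \<or> b \<in> J0" using ha hb False unfolding homog_def by blast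
    hence "\<forall>f. sc (Dop \<delta> a b (bS f)) = 0 * \<delta> f"
    proof
      assume "a \<in> J0"
      hence a0: "y = 0" "y1 = 0" "y2 = 0" "y3 = 0" using a by (simp_all add: J0_def)
      show ?thesis unfolding D unfolding a b a0 by (simp add: jmul_def jck_ops algebra_simps)
    next
      assume "b \<in> J0"
      hence b0: "y' = 0" "y1' = 0" "y2' = 0" "y3' = 0" using b by (simp_all add: J0_def)
      show ?thesis unfolding D unfolding a b b0 by (simp add: jmul_def jck_ops algebra_simps)
    qed
    thus ?thesis by blast
  qed
qed

lemma inv_span: "d \<in> spanF emb {Dop \<delta> a b |a b. homog a \<and> homog b} \<Longrightarrow> \<exists>c. \<forall>f. sc (d (bS f)) = c * \<delta> f"
proof (induct rule: spanF_induct)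
  case 1 show ?case by (rule exI[of _ 0]) (simp add: jck_ops)
next
  case (2 d' g k)
  then obtain c where c: "\<forall>f. sc (d' (bS f)) = c * \<delta> f" by blast
  from 2 obtain c' where c': "\<forall>f. sc (g (bS f)) = c' * \<delta> f" using inv_Dop by blast
  have "\<forall>f. sc (d' (bS f) + zmul (emb k) (g (bS f))) = (c + emb k * c') * \<delta> f"
    using c c' by (simp add: jck_ops algebra_simps)
  thus ?case by blast
qed






lemma sg_add: "sg a b (gadd \<alpha> \<beta>) = (sg a b \<alpha> * sg a b \<beta> :: 'f)"
  by (cases \<alpha>; cases \<beta>; cases a; cases b) (auto simp: sg_def gadd_def)

lemma emb_sg_sq: "emb (sg a b \<gamma>) * emb (sg a b \<gamma>) = 1"
  by (cases \<gamma>; cases a; cases b) (auto simp: sg_def)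

lemma sig_mul: "sig emb a b (jmul \<delta> u v) = jmul \<delta> (sig emb a b u) (sig emb a b v)"
  by (cases a; cases b) (simp_all add: sig_def sg_def jmul_def algebra_simps)

lemma sig_inv[simp]: "sig emb a b (sig emb a b u) = u"
  by (cases a; cases b; cases u) (simp_all add: sig_def sg_def)

lemma sig_add: "sig emb a b (u + v) = sig emb a b u + sig emb a b v"
  by (simp add: sig_def jck_ops algebra_simps)

lemma sig_zmul: "sig emb a b (zmul z u) = zmul z (sig emb a b u)"
  by (simp add: sig_def jck_ops algebra_simps)

lemma sig_J0: "u \<in> J0 \<Longrightarrow> sig emb a b u \<in> J0" by (simp add: sig_def J0_def)
lemma sig_J1: "u \<in> J1 \<Longrightarrow> sig emb a b u \<in> J1" by (simp add: sig_def J1_def)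

lemma sig_g: "u \<in> gcomp \<beta> \<Longrightarrow> sig emb a b u = zmul (emb (sg a b \<beta>)) u"
  by (cases \<beta>; cases "fst \<beta>"; cases "snd \<beta>"; cases u; cases a; cases b) (auto simp: sig_def zmul_def sg_def)

lemma jmul_add1: "jmul \<delta> (u + v) w = jmul \<delta> u w + jmul \<delta> v w"
  by (simp add: jmul_def jck_ops algebra_simps)
lemma jmul_add2: "jmul \<delta> u (v + w) = jmul \<delta> u v + jmul \<delta> u w"
  by (simp add: jmul_def jck_ops algebra_simps)
lemma jmul_zmul1: "jmul \<delta> (zmul (emb k) u) w = zmul (emb k) (jmul \<delta> u w)"
  by (simp add: jmul_def jck_ops algebra_simps)
lemma jmul_zmul2: "jmul \<delta> u (zmul (emb k) w) = zmul (emb k) (jmul \<delta> u w)"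
  by (simp add: jmul_def jck_ops algebra_simps)
lemma zmul_add: "zmul z (u + v) = zmul z u + zmul z v"
  by (simp add: jck_ops algebra_simps)
lemma zmul_zmul: "zmul z (zmul w u) = zmul (z * w) u"
  by (simp add: jck_ops algebra_simps)
lemma zmul_comm: "zmul z (zmul w u) = zmul w (zmul z u)"
  by (simp add: jck_ops algebra_simps)

lemma ED_conj: "d \<in> EvenDerJ emb \<delta> \<Longrightarrow> (\<lambda>c. sig emb a b (d (sig emb a b c))) \<in> EvenDerJ emb \<delta>"
proof -
  assume E: "d \<in> EvenDerJ emb \<delta>"
  show ?thesis unfolding EvenDerJ_def flin_def
    by (simp add: sig_add sig_zmul ED_add[OF E] ED_zmul[OF E] ED_mul[OF E] sig_mul
          sig_J0 sig_J1 ED_J0[OF E] ED_J1[OF E])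
qed

lemma ED_sum: "d1 \<in> EvenDerJ emb \<delta> \<Longrightarrow> d2 \<in> EvenDerJ emb \<delta> \<Longrightarrow> (\<lambda>c. d1 c + d2 c) \<in> EvenDerJ emb \<delta>"
proof -
  assume E1: "d1 \<in> EvenDerJ emb \<delta>" and E2: "d2 \<in> EvenDerJ emb \<delta>"
  have J0: "u \<in> J0 \<Longrightarrow> v \<in> J0 \<Longrightarrow> u + v \<in> J0" for u v :: "'z jck" by (simp add: J0_def jck_ops)
  have J1: "u \<in> J1 \<Longrightarrow> v \<in> J1 \<Longrightarrow> u + v \<in> J1" for u v :: "'z jck" by (simp add: J1_def jck_ops)
  show ?thesis unfolding EvenDerJ_def flin_def
    by (simp add: ED_add[OF E1] ED_add[OF E2] ED_zmul[OF E1] ED_zmul[OF E2] ED_mul[OF E1] ED_mul[OF E2]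
        zmul_add jmul_add1 jmul_add2 J0 J1 ED_J0[OF E1] ED_J1[OF E1] ED_J0[OF E2] ED_J1[OF E2] algebra_simps)
qed

lemma ED_smul: "d \<in> EvenDerJ emb \<delta> \<Longrightarrow> (\<lambda>c. zmul (emb k) (d c)) \<in> EvenDerJ emb \<delta>"
proof -
  assume E: "d \<in> EvenDerJ emb \<delta>"
  have J0: "u \<in> J0 \<Longrightarrow> zmul z u \<in> J0" for u :: "'z jck" and z by (simp add: J0_def jck_ops)
  have J1: "u \<in> J1 \<Longrightarrow> zmul z u \<in> J1" for u :: "'z jck" and z by (simp add: J1_def jck_ops)
  show ?thesis unfolding EvenDerJ_def flin_def
    by (simp add: ED_add[OF E] ED_zmul[OF E] ED_mul[OF E] zmul_add zmul_comm jmul_zmul1 jmul_zmul2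
        J0 J1 ED_J0[OF E] ED_J1[OF E])
qed

definition cterm :: "bool \<Rightarrow> bool \<Rightarrow> bool \<times> bool \<Rightarrow> ('z jck \<Rightarrow> 'z jck) \<Rightarrow> 'z jck \<Rightarrow> 'z jck" where
  "cterm a b \<alpha> d = (\<lambda>c. zmul (emb (sg a b \<alpha>)) (sig emb a b (d (sig emb a b c))))"

definition proj :: "bool \<times> bool \<Rightarrow> ('z jck \<Rightarrow> 'z jck) \<Rightarrow> 'z jck \<Rightarrow> 'z jck" where
  "proj \<alpha> d = (\<lambda>c. zmul (emb (inverse 4)) (cterm False False \<alpha> d c + cterm True False \<alpha> d c
      + cterm False True \<alpha> d c + cterm True True \<alpha> d c))"

lemma cterm_E: "d \<in> EvenDerJ emb \<delta> \<Longrightarrow> cterm a b \<alpha> d \<in> EvenDerJ emb \<delta>"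
  unfolding cterm_def by (rule ED_smul[OF ED_conj])

lemma proj_E: "d \<in> EvenDerJ emb \<delta> \<Longrightarrow> proj \<alpha> d \<in> EvenDerJ emb \<delta>"
proof -
  assume E: "d \<in> EvenDerJ emb \<delta>"
  have "(\<lambda>c. cterm False False \<alpha> d c + cterm True False \<alpha> d c) \<in> EvenDerJ emb \<delta>"
    by (rule ED_sum[OF cterm_E[OF E] cterm_E[OF E]])
  hence "(\<lambda>c. cterm False False \<alpha> d c + cterm True False \<alpha> d c + cterm False True \<alpha> d c) \<in> EvenDerJ emb \<delta>"
    using ED_sum[OF _ cterm_E[OF E]] by blast
  hence "(\<lambda>c. cterm False False \<alpha> d c + cterm True False \<alpha> d c + cterm False True \<alpha> d c
      + cterm True True \<alpha> d c) \<in> EvenDerJ emb \<delta>"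
    using ED_sum[OF _ cterm_E[OF E]] by blast
  from ED_smul[OF this, of "inverse 4"] show ?thesis unfolding proj_def .
qed

lemma cterm_g: "d \<in> EvenDerJ emb \<delta> \<Longrightarrow> c \<in> gcomp \<beta> \<Longrightarrow>
   cterm a b \<alpha> d c = zmul (emb (sg a b \<alpha>) * emb (sg a b \<beta>)) (sig emb a b (d c))"
  unfolding cterm_def by (simp add: sig_g ED_zmul sig_zmul zmul_zmul)

lemma comb_g: "zmul (emb (inverse 4))
     (zmul (emb (sg False False \<alpha>) * emb (sg False False \<beta>)) (sig emb False False y)
    + zmul (emb (sg True False \<alpha>) * emb (sg True False \<beta>)) (sig emb True False y)
    + zmul (emb (sg False True \<alpha>) * emb (sg False True \<beta>)) (sig emb False True y)
    + zmul (emb (sg True True \<alpha>) * emb (sg True True \<beta>)) (sig emb True True y)) \<in> gcomp (gadd \<alpha> \<beta>)"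
  by (cases \<alpha>; cases \<beta>; cases "fst \<alpha>"; cases "snd \<alpha>"; cases "fst \<beta>"; cases "snd \<beta>")
     (simp_all add: sg_def sig_def gadd_def jck_ops)

lemma proj_in: "d \<in> EvenDerJ emb \<delta> \<Longrightarrow> proj \<alpha> d \<in> DerJ0 emb \<delta> \<alpha>"
proof -
  assume E: "d \<in> EvenDerJ emb \<delta>"
  have "\<forall>\<beta>. \<forall>c\<in>gcomp \<beta>. proj \<alpha> d c \<in> gcomp (gadd \<alpha> \<beta>)"
  proof (intro allI ballI)
    fix \<beta> and c :: "'z jck" assume c: "c \<in> gcomp \<beta>"
    show "proj \<alpha> d c \<in> gcomp (gadd \<alpha> \<beta>)"
      unfolding proj_def cterm_g[OF E c] using comb_g[of \<alpha> \<beta> "d c"] by simp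
  qed
  thus ?thesis unfolding DerJ0_def using proj_E[OF E] by blast
qed

lemma inv4: "emb (inverse 4) * 4 = (1::'z)"
proof -
  have "(4::'f) \<noteq> 0" using char by (metis mult_2 mult_eq_0_iff numeral_Bit0 numeral_times_numeral one_add_one)
  hence "inverse (4::'f) * 4 = 1" by simp
  hence "emb (inverse 4) * emb 4 = 1" by (metis embmult emb1)
  moreover have "emb (4::'f) = 4"
    by (metis embadd emb1 numeral_Bit0 one_add_one)
  ultimately show ?thesis by simp
qed

lemma proj_sum: "proj (False,False) d c + proj (True,False) d c + proj (False,True) d c + proj (True,True) d c = d (c::'z jck)"
proof -
  define q where "q = emb (inverse 4)"
  have q: "q * 4 = 1" unfolding q_def by (rule inv4)
  have q': "q * (x * 4) = x" for x using q by (metis mult.assoc mult.commute mult_1)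
  show ?thesis
    unfolding proj_def cterm_def q_def[symmetric]
    apply (rule jck.expand)
    apply (simp add: sg_def sig_def jck_ops)
    apply (simp_all add: algebra_simps q')
    done
qed

lemma sep: "y1 \<in> gcomp (gadd (False,False) \<beta>) \<Longrightarrow> y2 \<in> gcomp (gadd (True,False) \<beta>) \<Longrightarrow>
   y3 \<in> gcomp (gadd (False,True) \<beta>) \<Longrightarrow> y4 \<in> gcomp (gadd (True,True) \<beta>) \<Longrightarrow>
   y1 + y2 + y3 + y4 = (0::'z jck) \<Longrightarrow> y1 = 0 \<and> y2 = 0 \<and> y3 = 0 \<and> y4 = 0"
  by (cases \<beta>; cases "fst \<beta>"; cases "snd \<beta>"; cases y1; cases y2; cases y3; cases y4)
     (auto simp: gadd_def jck_ops)

lemma gminus: "u \<in> gcomp \<gamma> \<Longrightarrow> v \<in> gcomp \<gamma> \<Longrightarrow> u - v \<in> gcomp \<gamma>"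
  by (cases \<gamma>; cases "fst \<gamma>"; cases "snd \<gamma>") (auto simp: jck_ops)

definition part :: "bool \<times> bool \<Rightarrow> 'z jck \<Rightarrow> 'z jck" where
  "part \<beta> c = (if \<beta> = (False,False) then JE (sc c) 0 0 0 (xc c) 0 0 0
     else if \<beta> = (True,False) then JE 0 (w1c c) 0 0 0 (x1c c) 0 0
     else if \<beta> = (False,True) then JE 0 0 (w2c c) 0 0 0 (x2c c) 0
     else JE 0 0 0 (w3c c) 0 0 0 (x3c c))"

lemma part_in: "part \<beta> c \<in> gcomp \<beta>"
  by (cases \<beta>; cases "fst \<beta>"; cases "snd \<beta>") (auto simp: part_def)

lemma part_dec: "c = part (False,False) c + part (True,False) c + part (False,True) c + part (True,True) c"
  by (cases c) (simp add: part_def jck_ops)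

lemma uniq:
  assumes d1: "d1 \<in> DerJ0 emb \<delta> (False,False)" and d2: "d2 \<in> DerJ0 emb \<delta> (True,False)"
    and d3: "d3 \<in> DerJ0 emb \<delta> (False,True)" and d4: "d4 \<in> DerJ0 emb \<delta> (True,True)"
    and e1: "e1 \<in> DerJ0 emb \<delta> (False,False)" and e2: "e2 \<in> DerJ0 emb \<delta> (True,False)"
    and e3: "e3 \<in> DerJ0 emb \<delta> (False,True)" and e4: "e4 \<in> DerJ0 emb \<delta> (True,True)"
    and eq: "\<And>c. d1 c + d2 c + d3 c + d4 c = e1 c + e2 c + e3 c + e4 c"
  shows "d1 = e1 \<and> d2 = e2 \<and> d3 = e3 \<and> d4 = e4"
proof -
  have G: "d1 c = e1 c \<and> d2 c = e2 c \<and> d3 c = e3 c \<and> d4 c = e4 c" if c: "c \<in> gcomp \<beta>" for c \<beta>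
  proof -
    have y1: "d1 c - e1 c \<in> gcomp (gadd (False,False) \<beta>)" by (rule gminus[OF DJ_g[OF d1 c] DJ_g[OF e1 c]])
    have y2: "d2 c - e2 c \<in> gcomp (gadd (True,False) \<beta>)" by (rule gminus[OF DJ_g[OF d2 c] DJ_g[OF e2 c]])
    have y3: "d3 c - e3 c \<in> gcomp (gadd (False,True) \<beta>)" by (rule gminus[OF DJ_g[OF d3 c] DJ_g[OF e3 c]])
    have y4: "d4 c - e4 c \<in> gcomp (gadd (True,True) \<beta>)" by (rule gminus[OF DJ_g[OF d4 c] DJ_g[OF e4 c]])
    have "(d1 c - e1 c) + (d2 c - e2 c) + (d3 c - e3 c) + (d4 c - e4 c)
        = (d1 c + d2 c + d3 c + d4 c) - (e1 c + e2 c + e3 c + e4 c)" by (simp add: algebra_simps)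
    also have "\<dots> = 0" using eq[of c] by simp
    finally show ?thesis using sep[OF y1 y2 y3 y4] by simp
  qed
  have A: "f \<in> DerJ0 emb \<delta> \<alpha> \<Longrightarrow> f c = f (part (False,False) c) + f (part (True,False) c)
     + f (part (False,True) c) + f (part (True,True) c)" for f \<alpha> c
  proof -
    assume "f \<in> DerJ0 emb \<delta> \<alpha>"
    hence E: "f \<in> EvenDerJ emb \<delta>" by (rule DJ_E)
    have "f c = f (part (False,False) c + part (True,False) c + part (False,True) c + part (True,True) c)"
      using part_dec[of c] by simp
    thus ?thesis by (simp add: ED_add[OF E])
  qed
  have "d1 c = e1 c \<and> d2 c = e2 c \<and> d3 c = e3 c \<and> d4 c = e4 c" for c
    using A[OF d1, of c] A[OF d2, of c] A[OF d3, of c] A[OF d4, of c]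
      A[OF e1, of c] A[OF e2, of c] A[OF e3, of c] A[OF e4, of c]
      G[OF part_in, of "(False,False)" c] G[OF part_in, of "(True,False)" c]
      G[OF part_in, of "(False,True)" c] G[OF part_in, of "(True,True)" c]
    by simp
  thus ?thesis by (simp add: fun_eq_iff)
qed

lemma decomp: "d \<in> EvenDerJ emb \<delta> \<Longrightarrow> \<exists>!(d1, d2, d3, d4).
           d1 \<in> DerJ0 emb \<delta> (False, False) \<and> d2 \<in> DerJ0 emb \<delta> (True, False)
         \<and> d3 \<in> DerJ0 emb \<delta> (False, True) \<and> d4 \<in> DerJ0 emb \<delta> (True, True)
         \<and> d = (\<lambda>c. d1 c + d2 c + d3 c + d4 c)"
proof -
  assume E: "d \<in> EvenDerJ emb \<delta>"
  let ?x = "(proj (False,False) d, proj (True,False) d, proj (False,True) d, proj (True,True) d)"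
  show ?thesis
  proof (rule ex1I[of _ ?x])
    show "case ?x of (d1, d2, d3, d4) \<Rightarrow> d1 \<in> DerJ0 emb \<delta> (False, False) \<and> d2 \<in> DerJ0 emb \<delta> (True, False)
         \<and> d3 \<in> DerJ0 emb \<delta> (False, True) \<and> d4 \<in> DerJ0 emb \<delta> (True, True)
         \<and> d = (\<lambda>c. d1 c + d2 c + d3 c + d4 c)"
      using proj_in[OF E] proj_sum[of d] by (simp add: fun_eq_iff)
  next
    fix y assume h: "case y of (d1, d2, d3, d4) \<Rightarrow> d1 \<in> DerJ0 emb \<delta> (False, False) \<and> d2 \<in> DerJ0 emb \<delta> (True, False)
         \<and> d3 \<in> DerJ0 emb \<delta> (False, True) \<and> d4 \<in> DerJ0 emb \<delta> (True, True)
         \<and> d = (\<lambda>c. d1 c + d2 c + d3 c + d4 c)"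
    obtain e1 e2 e3 e4 where y: "y = (e1, e2, e3, e4)" by (cases y)
    from h y have e: "e1 \<in> DerJ0 emb \<delta> (False, False)" "e2 \<in> DerJ0 emb \<delta> (True, False)"
      "e3 \<in> DerJ0 emb \<delta> (False, True)" "e4 \<in> DerJ0 emb \<delta> (True, True)"
      and de: "d = (\<lambda>c. e1 c + e2 c + e3 c + e4 c)" by auto
    have "e1 = proj (False,False) d \<and> e2 = proj (True,False) d \<and> e3 = proj (False,True) d \<and> e4 = proj (True,True) d"
      by (rule uniq[OF e proj_in[OF E] proj_in[OF E] proj_in[OF E] proj_in[OF E]])
         (simp add: proj_sum, simp add: de)
    thus "y = ?x" using y by simp
  qed
qed




lemma TmG_in: "Tm (\<lambda>z. - (2 * G * \<delta> z)) (\<delta> G) \<in> DerJ0 emb \<delta> (False,False)"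
  by (rule Tm_in) (simp_all add: algebra_simps)

lemma hx: "homog (xJ::'z jck)" "homog (zmul f (xJ::'z jck))" "xJ \<in> (Kset::'z jck set)" "zmul f xJ \<in> (Kset::'z jck set)"
  by (simp_all add: homog_def J1_def xJ_def zmul_def Kset_def)

lemma Dx_sub: "{Dop \<delta> xJ (zmul f xJ) | f. True} \<subseteq> {Dop \<delta> a b |a b. homog a \<and> homog b}"
proof
  fix d assume "d \<in> {Dop \<delta> xJ (zmul f xJ) | f. True}"
  then obtain f where "d = Dop \<delta> xJ (zmul f xJ)" by blast
  thus "d \<in> {Dop \<delta> a b |a b. homog a \<and> homog b}" using hx(1) hx(2)[of f] by blast
qed

lemma Dx_subK: "{Dop \<delta> xJ (zmul f xJ) | f. True} \<subseteq> {Dop \<delta> a b |a b. a \<in> Kset \<and> b \<in> Kset \<and> homog a \<and> homog b}"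
proof
  fix d assume "d \<in> {Dop \<delta> xJ (zmul f xJ) | f. True}"
  then obtain f where "d = Dop \<delta> xJ (zmul f xJ)" by blast
  thus "d \<in> {Dop \<delta> a b |a b. a \<in> Kset \<and> b \<in> Kset \<and> homog a \<and> homog b}"
    using hx(1) hx(2)[of f] hx(3) hx(4)[of f] by blast
qed

lemma K_sub: "{Dop \<delta> a b |a b. a \<in> Kset \<and> b \<in> Kset \<and> homog a \<and> homog b} \<subseteq> {Dop \<delta> a b |a b. homog a \<and> homog b}"
  by blast

lemma C1: "DerJ0 emb \<delta> (False, False) = tildeD ` DerK0 emb \<delta>"
proof (intro set_eqI iffI)
  fix d assume d: "d \<in> DerJ0 emb \<delta> (False, False)"
  from cls00[OF d] obtain \<mu> a where Tm: "d = Tm \<mu> a" and ma: "\<forall>x y. \<mu> (x + y) = \<mu> x + \<mu> y" and m1: "\<mu> 1 = 0"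
    by blast
  have m0: "\<mu> 0 = 0" using ma[rule_format, of 0 0] by simp
  have t: "tildeD d = d" unfolding Tm by (rule tildeD_Tm[OF m0 m1])
  show "d \<in> tildeD ` DerK0 emb \<delta>" by (rule image_eqI[where f=tildeD and x=d, OF t[symmetric] DerFF_K[OF d]])
next
  fix d assume "d \<in> tildeD ` DerK0 emb \<delta>"
  then obtain d' where d': "d' \<in> DerK0 emb \<delta>" and d: "d = tildeD d'" by blast
  from clsK[OF d'] obtain \<mu> a where t: "tildeD d' = Tm \<mu> a"
    and ma: "\<forall>x y. \<mu> (x + y) = \<mu> x + \<mu> y" and ml: "\<forall>k x. \<mu> (emb k * x) = emb k * \<mu> x"
    and mm: "\<forall>x y. \<mu> (x * y) = \<mu> x * y + x * \<mu> y" and md: "\<forall>x. \<mu> (\<delta> x) = \<delta> (\<mu> x) + 2 * a * \<delta> x"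
    by blast
  show "d \<in> DerJ0 emb \<delta> (False, False)" unfolding d t
    by (rule Tm_in) (use ma ml mm md in blast)+
qed

lemma C2: "InderJ emb \<delta> \<inter> DerJ0 emb \<delta> (False, False) = spanF emb {Dop \<delta> xJ (zmul f xJ) | f. True}"
proof (intro set_eqI iffI)
  fix d assume "d \<in> InderJ emb \<delta> \<inter> DerJ0 emb \<delta> (False, False)"
  hence dI: "d \<in> InderJ emb \<delta>" and d: "d \<in> DerJ0 emb \<delta> (False, False)" by auto
  from cls00[OF d] obtain \<mu> a where Tm: "d = Tm \<mu> a" and mu: "\<mu> = (\<lambda>f. sc (d (bS f)))"
     and md: "\<forall>x. \<mu> (\<delta> x) = \<delta> (\<mu> x) + 2 * a * \<delta> x" by blast
  from inv_span dI obtain c where c: "\<forall>f. sc (d (bS f)) = c * \<delta> f" unfolding InderJ_def by blast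
  have "\<exists>G. Tm \<mu> a = Tm (\<lambda>z. - (2 * G * \<delta> z)) (\<delta> G)"
    by (rule Tm_cdelta) (use c mu md in auto)
  thus "d \<in> spanF emb {Dop \<delta> xJ (zmul f xJ) | f. True}" unfolding span_x Tm by blast
next
  fix d assume d: "d \<in> spanF emb {Dop \<delta> xJ (zmul f xJ) | f. True}"
  then obtain G where "d = Tm (\<lambda>z. - (2 * G * \<delta> z)) (\<delta> G)" unfolding span_x by blast
  hence "d \<in> DerJ0 emb \<delta> (False, False)" using TmG_in by simp
  moreover have "d \<in> InderJ emb \<delta>" unfolding InderJ_def using spanF_mono[OF Dx_sub] d by blast
  ultimately show "d \<in> InderJ emb \<delta> \<inter> DerJ0 emb \<delta> (False, False)" by blast
qed

lemma C3: "spanF emb {Dop \<delta> xJ (zmul f xJ) | f. True} = tildeD ` InderK0 emb \<delta>"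
proof (intro set_eqI iffI)
  fix d assume d: "d \<in> spanF emb {Dop \<delta> xJ (zmul f xJ) | f. True}"
  then obtain G where Tm: "d = Tm (\<lambda>z. - (2 * G * \<delta> z)) (\<delta> G)" unfolding span_x by blast
  hence "d \<in> DerJ0 emb \<delta> (False, False)" using TmG_in by simp
  hence "d \<in> DerK0 emb \<delta>" by (rule DerFF_K)
  moreover have "d \<in> spanF emb {Dop \<delta> a b |a b. a \<in> Kset \<and> b \<in> Kset \<and> homog a \<and> homog b}"
    using spanF_mono[OF Dx_subK] d by blast
  ultimately have "d \<in> InderK0 emb \<delta>" unfolding InderK0_def by blast
  moreover have "tildeD d = d" unfolding Tm by (rule tildeD_Tm) simp_all
  ultimately show "d \<in> tildeD ` InderK0 emb \<delta>" by (metis image_eqI)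
next
  fix d assume "d \<in> tildeD ` InderK0 emb \<delta>"
  then obtain d' where d': "d' \<in> InderK0 emb \<delta>" and d: "d = tildeD d'" by blast
  have dK: "d' \<in> DerK0 emb \<delta>" and dS: "d' \<in> spanF emb {Dop \<delta> a b |a b. homog a \<and> homog b}"
    using d' spanF_mono[OF K_sub] unfolding InderK0_def by blast+
  from clsK[OF dK] obtain \<mu> a where Tm: "tildeD d' = Tm \<mu> a" and mu: "\<mu> = (\<lambda>f. sc (d' (bS f)))"
     and md: "\<forall>x. \<mu> (\<delta> x) = \<delta> (\<mu> x) + 2 * a * \<delta> x" by blast
  from inv_span[OF dS] obtain c where c: "\<forall>f. sc (d' (bS f)) = c * \<delta> f" by blast
  have "\<exists>G. Tm \<mu> a = Tm (\<lambda>z. - (2 * G * \<delta> z)) (\<delta> G)"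
    by (rule Tm_cdelta) (use c mu md in auto)
  thus "d \<in> spanF emb {Dop \<delta> xJ (zmul f xJ) | f. True}" unfolding span_x d Tm by blast
qed

lemma C4: "spanF emb {Dop \<delta> xJ (zmul f xJ) | f. True} =
         {tildeD (checkK \<mu> a) | \<mu> a. (\<exists>f. \<mu> = (\<lambda>z. f * \<delta> z))
                                      \<and> (\<forall>z. \<mu> (\<delta> z) - \<delta> (\<mu> z) = 2 * a * \<delta> z)}"
proof (intro set_eqI iffI)
  fix d assume "d \<in> spanF emb {Dop \<delta> xJ (zmul f xJ) | f. True}"
  then obtain G where Tm: "d = Tm (\<lambda>z. - (2 * G * \<delta> z)) (\<delta> G)" unfolding span_x by blast
  have e: "(\<lambda>z. - (2 * G * \<delta> z)) = (\<lambda>z. (- (2 * G)) * \<delta> z)" by (intro ext) simp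
  have "d = tildeD (checkK (\<lambda>z. (- (2 * G)) * \<delta> z) (\<delta> G))" unfolding Tm tildeD_check e ..
  moreover have "\<forall>z. (\<lambda>z. (- (2 * G)) * \<delta> z) (\<delta> z) - \<delta> ((\<lambda>z. (- (2 * G)) * \<delta> z) z) = 2 * \<delta> G * \<delta> z"
    by (simp add: algebra_simps)
  ultimately show "d \<in> {tildeD (checkK \<mu> a) | \<mu> a. (\<exists>f. \<mu> = (\<lambda>z. f * \<delta> z))
                                      \<and> (\<forall>z. \<mu> (\<delta> z) - \<delta> (\<mu> z) = 2 * a * \<delta> z)}" by blast
next
  fix d assume "d \<in> {tildeD (checkK \<mu> a) | \<mu> a. (\<exists>f. \<mu> = (\<lambda>z. f * \<delta> z))
                                      \<and> (\<forall>z. \<mu> (\<delta> z) - \<delta> (\<mu> z) = 2 * a * \<delta> z)}"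
  then obtain f a where d: "d = tildeD (checkK (\<lambda>z. f * \<delta> z) a)"
    and cond: "\<forall>z. f * \<delta> (\<delta> z) - \<delta> (f * \<delta> z) = 2 * a * \<delta> z" by auto
  have "\<exists>G. Tm (\<lambda>z. f * \<delta> z) a = Tm (\<lambda>z. - (2 * G * \<delta> z)) (\<delta> G)"
  proof (rule Tm_cdelta)
    fix x have h: "f * \<delta> (\<delta> x) - \<delta> (f * \<delta> x) = 2 * a * \<delta> x" using cond by blast
    from h have "f * \<delta> (\<delta> x) = 2 * a * \<delta> x + \<delta> (f * \<delta> x)" by (simp only: diff_eq_eq)
    thus "f * \<delta> (\<delta> x) = \<delta> (f * \<delta> x) + 2 * a * \<delta> x" by (simp only: add.commute)
  qed simp
  thus "d \<in> spanF emb {Dop \<delta> xJ (zmul f xJ) | f. True}" unfolding span_x d tildeD_check by blast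
qed

lemma C5: "DerJ0 emb \<delta> (True, False) = spanF emb {Dop \<delta> w2J (zmul f w3J) | f. True}"
  unfolding Der10 span_10 ..
lemma C6: "DerJ0 emb \<delta> (False, True) = spanF emb {Dop \<delta> w3J (zmul f w1J) | f. True}"
  unfolding Der01 span_01 ..
lemma C7: "DerJ0 emb \<delta> (True, True) = spanF emb {Dop \<delta> w1J (zmul f w2J) | f. True}"
  unfolding Der11 span_11 ..

lemma C4': "tildeD ` InderK0 emb \<delta> =
         {tildeD (checkK \<mu> a) | \<mu> a. (\<exists>f. \<mu> = (\<lambda>z. f * \<delta> z))
                                      \<and> (\<forall>z. \<mu> (\<delta> z) - \<delta> (\<mu> z) = 2 * a * \<delta> z)}"
  unfolding C3[symmetric] by (rule C4)

lemma C9: "\<alpha> \<noteq> (False, False) \<Longrightarrow> DerJ0 emb \<delta> \<alpha> \<subseteq> InderJ emb \<delta>"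
proof -
  assume a: "\<alpha> \<noteq> (False, False)"
  have h: "homog w1J" "homog w2J" "homog w3J" "homog (zmul f w1J)" "homog (zmul f w2J)" "homog (zmul f w3J)" for f :: 'z
    by (simp_all add: homog_def J0_def w1J_def w2J_def w3J_def zmul_def)
  have s1: "{Dop \<delta> w2J (zmul f w3J) | f. True} \<subseteq> {Dop \<delta> a b |a b. homog a \<and> homog b}"
  proof
    fix d assume "d \<in> {Dop \<delta> w2J (zmul f w3J) | f. True}"
    then obtain f where "d = Dop \<delta> w2J (zmul f w3J)" by blast
    thus "d \<in> {Dop \<delta> a b |a b. homog a \<and> homog b}" using h(2) h(6)[of f] by blast
  qed
  have s2: "{Dop \<delta> w3J (zmul f w1J) | f. True} \<subseteq> {Dop \<delta> a b |a b. homog a \<and> homog b}"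
  proof
    fix d assume "d \<in> {Dop \<delta> w3J (zmul f w1J) | f. True}"
    then obtain f where "d = Dop \<delta> w3J (zmul f w1J)" by blast
    thus "d \<in> {Dop \<delta> a b |a b. homog a \<and> homog b}" using h(3) h(4)[of f] by blast
  qed
  have s3: "{Dop \<delta> w1J (zmul f w2J) | f. True} \<subseteq> {Dop \<delta> a b |a b. homog a \<and> homog b}"
  proof
    fix d assume "d \<in> {Dop \<delta> w1J (zmul f w2J) | f. True}"
    then obtain f where "d = Dop \<delta> w1J (zmul f w2J)" by blast
    thus "d \<in> {Dop \<delta> a b |a b. homog a \<and> homog b}" using h(1) h(5)[of f] by blast
  qed
  obtain p q where pq: "\<alpha> = (p, q)" by (cases \<alpha>)
  show ?thesis
  proof (cases p)
    case True
    show ?thesis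
    proof (cases q)
      case True
      thus ?thesis using pq \<open>p\<close> C7 spanF_mono[OF s3] unfolding InderJ_def by simp
    next
      case False
      thus ?thesis using pq \<open>p\<close> C5 spanF_mono[OF s1] unfolding InderJ_def by simp
    qed
  next
    case False
    hence q using a pq by auto
    thus ?thesis using pq False C6 spanF_mono[OF s2] unfolding InderJ_def by simp
  qed
qed

lemma main:
  shows
    "DerJ0 emb \<delta> (False, False) = tildeD ` DerK0 emb \<delta>
     \<and> InderJ emb \<delta> \<inter> DerJ0 emb \<delta> (False, False) = spanF emb {Dop \<delta> xJ (zmul f xJ) | f. True}
     \<and> spanF emb {Dop \<delta> xJ (zmul f xJ) | f. True} = tildeD ` InderK0 emb \<delta>
     \<and> tildeD ` InderK0 emb \<delta> =
         {tildeD (checkK \<mu> a) | \<mu> a. (\<exists>f. \<mu> = (\<lambda>z. f * \<delta> z))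
                                      \<and> (\<forall>z. \<mu> (\<delta> z) - \<delta> (\<mu> z) = 2 * a * \<delta> z)}
     \<and> DerJ0 emb \<delta> (True, False) = spanF emb {Dop \<delta> w2J (zmul f w3J) | f. True}
     \<and> DerJ0 emb \<delta> (False, True) = spanF emb {Dop \<delta> w3J (zmul f w1J) | f. True}
     \<and> DerJ0 emb \<delta> (True, True) = spanF emb {Dop \<delta> w1J (zmul f w2J) | f. True}
     \<and> (\<forall>d \<in> EvenDerJ emb \<delta>. \<exists>!(d1, d2, d3, d4).
           d1 \<in> DerJ0 emb \<delta> (False, False) \<and> d2 \<in> DerJ0 emb \<delta> (True, False)
         \<and> d3 \<in> DerJ0 emb \<delta> (False, True) \<and> d4 \<in> DerJ0 emb \<delta> (True, True)
         \<and> d = (\<lambda>c. d1 c + d2 c + d3 c + d4 c))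
     \<and> (\<forall>\<alpha>. \<alpha> \<noteq> (False, False) \<longrightarrow> DerJ0 emb \<delta> \<alpha> \<subseteq> InderJ emb \<delta>)"
  apply (intro conjI)
  apply (rule C1)
  apply (rule C2)
  apply (rule C3)
  apply (rule C4')
  apply (rule C5)
  apply (rule C6)
  apply (rule C7)
  apply (intro ballI)
  apply (erule decomp)
  apply (intro allI impI)
  apply (erule C9)
  done

end

theorem proposition4p1:
  fixes emb :: "'f::field \<Rightarrow> 'z::comm_ring_1" and \<delta> :: "'z \<Rightarrow> 'z"
  assumes char: "(2::'f) \<noteq> 0"
    and emb_one: "emb 1 = 1"
    and emb_add: "\<forall>a b. emb (a + b) = emb a + emb b"
    and emb_mult: "\<forall>a b. emb (a * b) = emb a * emb b"
    and der_add: "\<forall>a b. \<delta> (a + b) = \<delta> a + \<delta> b"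
    and der_lin: "\<forall>k a. \<delta> (emb k * a) = emb k * \<delta> a"
    and der_leib: "\<forall>a b. \<delta> (a * b) = \<delta> a * b + a * \<delta> b"
    and nondeg: "\<forall>z. \<exists>(n::nat) f g. z = (\<Sum>i<n. f i * \<delta> (g i))"
  shows
    "DerJ0 emb \<delta> (False, False) = tildeD ` DerK0 emb \<delta>
     \<and> InderJ emb \<delta> \<inter> DerJ0 emb \<delta> (False, False) = spanF emb {Dop \<delta> xJ (zmul f xJ) | f. True}
     \<and> spanF emb {Dop \<delta> xJ (zmul f xJ) | f. True} = tildeD ` InderK0 emb \<delta>
     \<and> tildeD ` InderK0 emb \<delta> =
         {tildeD (checkK \<mu> a) | \<mu> a. (\<exists>f. \<mu> = (\<lambda>z. f * \<delta> z))
                                      \<and> (\<forall>z. \<mu> (\<delta> z) - \<delta> (\<mu> z) = 2 * a * \<delta> z)}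
     \<and> DerJ0 emb \<delta> (True, False) = spanF emb {Dop \<delta> w2J (zmul f w3J) | f. True}
     \<and> DerJ0 emb \<delta> (False, True) = spanF emb {Dop \<delta> w3J (zmul f w1J) | f. True}
     \<and> DerJ0 emb \<delta> (True, True) = spanF emb {Dop \<delta> w1J (zmul f w2J) | f. True}
     \<and> (\<forall>d \<in> EvenDerJ emb \<delta>. \<exists>!(d1, d2, d3, d4).
           d1 \<in> DerJ0 emb \<delta> (False, False) \<and> d2 \<in> DerJ0 emb \<delta> (True, False)
         \<and> d3 \<in> DerJ0 emb \<delta> (False, True) \<and> d4 \<in> DerJ0 emb \<delta> (True, True)
         \<and> d = (\<lambda>c. d1 c + d2 c + d3 c + d4 c))
     \<and> (\<forall>\<alpha>. \<alpha> \<noteq> (False, False) \<longrightarrow> DerJ0 emb \<delta> \<alpha> \<subseteq> InderJ emb \<delta>)"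
proof -
  interpret ck emb \<delta> using assms by (unfold_locales) auto
  show ?thesis by (rule main)
qed

end
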